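(* Assume that $w^+,w^-$ are Hölder continuous of a common order $\alpha\in(0,1]$ with constant $H>0$, that there exists $\gamma\le\alpha$ with $\int_0^\infty P(u^+(X)>z)^{\gamma}dz<\infty$ and $\int_0^\infty P(u^-(X)>z)^{\gamma}dz<\infty$, that $u^+,u^-$ are continuous and strictly increasing on the relevant domains, and that the distribution functions $F^+(z)=P(u^+(X)\le z)$ and $F^-(z)=P(u^-(X)\le z)$ are Lipschitz continuous on $(0,\infty)$ with constants $L^+$ and $L^-$ respectively. Let $\overline{\mathbb{C}}_n$ be the CPT estimator built from $n$ i.i.d. copies of $X$. Then $\overline{\mathbb{C}}_n\to\mathbb{C}(X)$ almost surely as $n\to\infty$.
   Context: Weight functions: $w^+,w^-:[0,1]\to[0,1]$ are continuous, nondecreasing, with $w^\pm(0)=0$ and $w^\pm(1)=1$. Utility functions: $u^+,u^-:\mathbb{R}\to[0,\infty)$ are continuous. For a real-valued random variable $X$, its CPT-value is $$\mathbb{C}(X)=\int_0^\infty w^+\big(P(u^+(X)>z)\big)\,dz-\int_0^\infty w^-\big(P(u^-(X)>z)\big)\,dz .$$ CPT estimator: given i.i.d. copies $X_1,\dots,X_n$ of $X$, let $U_{(1)}\le\cdots\le U_{(n)}$ be the order statistics of $u^+(X_1),\dots,u^+(X_n)$ and $V_{(1)}\le\cdots\le V_{(n)}$ those of $u^-(X_1),\dots,u^-(X_n)$, and set $$\overline{\mathbb{C}}_n=\sum_{i=1}^n U_{(i)}\Big(w^+\big(\tfrac{n-i+1}{n}\big)-w^+\big(\tfrac{n-i}{n}\big)\Big)-\sum_{i=1}^n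 V_{(i)}\Big(w^-\big(\tfrac{n-i+1}{n}\big)-w^-\big(\tfrac{n-i}{n}\big)\Big),$$ equivalently $\overline{\mathbb{C}}_n=\int_0^\infty w^+(1-\hat F^+_n(x))\,dx-\int_0^\infty w^-(1-\hat F^-_n(x))\,dx$ with $\hat F^\pm_n(x)=\frac1n\sum_{i=1}^n\mathbf 1\{u^\pm(X_i)\le x\}$. A function $f:[0,1]\to\mathbb{R}$ is Hölder continuous of order $\alpha\in(0,1]$ with constant $H>0$ if $|f(x)-f(y)|\le H|x-y|^{\alpha}$ for all $x,y\in[0,1]$. *)

theory Defs
  imports "HOL-Probability.Probability"
begin

definition weight_fn :: "(real \<Rightarrow> real) \<Rightarrow> bool" where
  "weight_fn w \<longleftrightarrow> continuous_on {0..1} w \<and> mono_on {0..1} w \<and>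
     w ` {0..1} \<subseteq> {0..1} \<and> w 0 = 0 \<and> w 1 = 1"

definition holder_on01 :: "real \<Rightarrow> real \<Rightarrow> (real \<Rightarrow> real) \<Rightarrow> bool" where
  "holder_on01 \<alpha> H f \<longleftrightarrow> (\<forall>x\<in>{0..1}. \<forall>y\<in>{0..1}. \<bar>f x - f y\<bar> \<le> H * \<bar>x - y\<bar> powr \<alpha>)"

definition cpt_value ::
  "'a measure \<Rightarrow> (real \<Rightarrow> real) \<Rightarrow> (real \<Rightarrow> real) \<Rightarrow> (real \<Rightarrow> real) \<Rightarrow> (real \<Rightarrow> real)
    \<Rightarrow> ('a \<Rightarrow> real) \<Rightarrow> real" where
  "cpt_value M wp wm up um X =
     (LBINT z:{0..}. wp (measure M {\<omega> \<in> space M. up (X \<omega>) > z}))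
   - (LBINT z:{0..}. wm (measure M {\<omega> \<in> space M. um (X \<omega>) > z}))"

text \<open>CPT estimator from a sample xs = [X_1,...,X_n] (order statistics,
  0-based: entry j of the sorted list is the (j+1)-th order statistic).\<close>
definition cpt_est ::
  "(real \<Rightarrow> real) \<Rightarrow> (real \<Rightarrow> real) \<Rightarrow> (real \<Rightarrow> real) \<Rightarrow> (real \<Rightarrow> real) \<Rightarrow> real list \<Rightarrow> real" where
  "cpt_est wp wm up um xs =
    (let n = length xs; U = sort (map up xs); V = sort (map um xs) in
      (\<Sum>j<n. U ! j * (wp (real (n - j) / real n) - wp ((real (n - j) - 1) / real n)))
    - (\<Sum>j<n. V ! j * (wm (real (n - j) / real n) - wm ((real (n - j) - 1) / real n))))"

end

theory Submission
  imports Defs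
begin

lemma geom_ind_bound1:
  fixes v :: real assumes v: "v \<ge> 0"
  shows "(\<Sum>j<J. if v > 2^j then 2^j else 0) \<le> 2 * v \<and> (\<Sum>j<J. if v > 2^j then 2^j else 0) \<le> (2::real)^J - 1"
proof (induction J)
  case 0
  then show ?case using v by simp
next
  case (Suc J)
  show ?case
  proof (cases "v > 2^J")
    case True
    then show ?thesis using Suc by simp
  next
    case False
    have p: "(0::real) < 2^J" by simp
    show ?thesis using Suc False apply simp using p by linarith
  qed
qed

lemma geom_bound1:
  fixes v :: real assumes v: "v \<ge> 0"
  shows "(\<Sum>j<J. if v > 2^j then 2^j else 0) \<le> 2 * v"
  using geom_ind_bound1[OF v] by blast

lemma geom_ind_bound2:
  fixes v :: real assumes v: "v \<ge> 0"
  shows "(\<Sum>j<J. (if v \<le> 2^j then v\<^sup>2 else 0) / 2^j) + (if v \<le> 2^J then 2 * v\<^sup>2 / 2^J else 0) \<le> 2 * v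
      \<and> (v > 2^J \<longrightarrow> (\<Sum>j<J. (if v \<le> 2^j then v\<^sup>2 else 0) / 2^j) = 0)"
proof (induction J)
  case 0
  have "v \<le> 1 \<Longrightarrow> 2 * v\<^sup>2 \<le> 2 * v" using v by (simp add: power2_eq_square mult_left_le_one_le)
  then show ?case using v by auto
next
  case (Suc J)
  define T where "T = (\<Sum>j<J. (if v \<le> 2^j then v\<^sup>2 else 0) / (2::real)^j)"
  show ?case
  proof (cases "v \<le> 2^J")
    case True
    moreover have "(0::real) < 2^J" by simp
    ultimately have "v \<le> 2^Suc J" by (simp only: power_Suc)
    have h1: "2 * v\<^sup>2 / 2 ^ Suc J = v\<^sup>2 / (2::real)^J" by simp
    have h2: "2 * v\<^sup>2 / 2 ^ J = v\<^sup>2 / (2::real)^J + v\<^sup>2 / (2::real)^J" by simp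
    have eqT: "(\<Sum>j<Suc J. (if v \<le> 2^j then v\<^sup>2 else 0) / (2::real)^j) = T + v\<^sup>2 / 2^J"
      using True by (simp add: T_def)
    have R: "T + 2 * v\<^sup>2 / 2^J \<le> 2 * v" using Suc.IH True by (simp add: T_def)
    have vS: "v \<le> 2^Suc J" by fact
    show ?thesis
    proof (intro conjI impI)
      show "(\<Sum>j<Suc J. (if v \<le> 2^j then v\<^sup>2 else 0) / 2^j) + (if v \<le> 2^Suc J then 2 * v\<^sup>2 / 2^Suc J else 0) \<le> 2 * v"
        unfolding if_P[OF vS] eqT h1 using R h2 by linarith
    qed (use vS in linarith)
  next
    case False
    then have T0: "T = 0" using Suc unfolding T_def by auto
    have "v > 2 ^ Suc J \<longrightarrow> v > 2^J"
    proof
      assume "v > 2 ^ Suc J"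
      moreover have "(0::real) < 2^J" by simp
      ultimately show "v > 2^J" by (simp only: power_Suc)
    qed
    moreover have "v \<le> 2 ^ Suc J \<Longrightarrow> 2 * v\<^sup>2 / 2 ^ Suc J \<le> 2 * v"
    proof -
      assume h: "v \<le> 2 ^ Suc J"
      have "2 * v\<^sup>2 / 2 ^ Suc J = v * (v / 2^J)" by (simp add: power2_eq_square)
      also have "\<dots> \<le> v * 2" using h v by (intro mult_left_mono) (auto simp: field_simps)
      finally show ?thesis by simp
    qed
    moreover have eqT': "(\<Sum>j<Suc J. (if v \<le> 2^j then v\<^sup>2 else 0) / (2::real)^j) = T"
      using False by (simp add: T_def)
    ultimately show ?thesis unfolding eqT' T0 using v by auto
  qed
qed

lemma geom_bound2:
  fixes v :: real assumes v: "v \<ge> 0"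
  shows "(\<Sum>j<J. (if v \<le> 2^j then v\<^sup>2 else 0) / 2^j) \<le> 2 * v"
proof -
  have "0 \<le> (if v \<le> 2^J then 2 * v\<^sup>2 / 2^J else 0)" by simp
  then show ?thesis using geom_ind_bound2[OF v, of J] by linarith
qed

lemma pow2_bracket: "n \<ge> 1 \<Longrightarrow> \<exists>k. n < 2^k \<and> 2^k \<le> 2 * (n::nat)"
proof (induction n rule: nat_induct_at_least)
  case base
  then show ?case by (intro exI[of _ 1]) auto
next
  case (Suc n)
  then obtain k where k: "n < 2^k" "2^k \<le> 2 * n" by auto
  show ?case
  proof (cases "Suc n < 2^k")
    case True then show ?thesis using k by (intro exI[of _ k]) auto
  next
    case False then have "Suc n = 2^k" using k by auto
    then show ?thesis by (intro exI[of _ "Suc k"]) auto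
  qed
qed

lemma powr_split_bound:
  fixes p c a :: real
  assumes "0 \<le> p" "0 < c" "0 < a" "a \<le> 1"
  shows "p powr a \<le> c powr a + p * c powr (a - 1)"
proof (cases "p \<le> c")
  case True
  then have "p powr a \<le> c powr a" using assms by (intro powr_mono2) auto
  moreover have "0 \<le> p * c powr (a - 1)" using assms by simp
  ultimately show ?thesis by linarith
next
  case False
  then have pc: "c < p" by simp
  then have p0: "0 < p" using assms by simp
  have "p powr a = p * p powr (a - 1)" using p0 by (simp add: powr_mult_base)
  also have "\<dots> \<le> p * c powr (a - 1)"
    using pc assms by (intro mult_left_mono) (auto simp: powr_mono2')
  moreover have "0 \<le> c powr a" by simp
  ultimately show ?thesis by linarith
qed

lemma powr_le_exp_small:
  fixes p a g :: real
  assumes "0 \<le> p" "p \<le> 1" "0 < g" "g \<le> a"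
  shows "p powr a \<le> p powr g"
  using assms powr_mono' by (cases "p = 0") auto

lemma max_powr_le:
  fixes x y a :: real
  assumes "0 \<le> x" "0 \<le> y" "0 < a"
  shows "max x y powr a \<le> x powr a + y powr a"
  using assms by (simp add: max_def)

lemma exp_powr_div: "0 < a \<Longrightarrow> exp (-z / a) powr a = exp (-z)" for z a :: real
  by (simp add: powr_def)

lemma mult_powr_le: 
  fixes p c a :: real
  assumes "0 \<le> p" "p \<le> c" "0 < c"
  shows "p * c powr (a - 1) \<le> c powr a"
proof -
  have "p * c powr (a - 1) \<le> c * c powr (a - 1)" using assms by (intro mult_right_mono) auto
  also have "\<dots> = c powr a" using assms by (simp add: powr_mult_base)
  finally show ?thesis .
qed

lemma powr_neg_exp_bound:
  fixes c z a :: real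
  assumes "exp (-z / a) \<le> c" "0 < a" "a \<le> 1" "0 \<le> z"
  shows "c powr (a - 1) \<le> exp (z / a)"
proof -
  have "c powr (a - 1) \<le> exp (-z / a) powr (a - 1)"
    using assms by (intro powr_mono2') auto
  also have "\<dots> = exp ((-z / a) * (a - 1))" by (simp add: powr_def)
  also have "\<dots> \<le> exp (z / a)"
  proof -
    have "(-z / a) * (a - 1) = z / a - z" using assms by (simp add: field_simps)
    also have "\<dots> \<le> z / a" using assms by simp
    finally show ?thesis by simp
  qed
  finally show ?thesis .
qed

lemma (in prob_space) variance_sum_indep:
  fixes Y :: "nat \<Rightarrow> 'a \<Rightarrow> real"
  assumes "finite I" and indep: "indep_vars (\<lambda>_. borel) Y I"
    and bnd: "\<And>i x. i \<in> I \<Longrightarrow> x \<in> space M \<Longrightarrow> \<bar>Y i x\<bar> \<le> B"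
  shows "variance (\<lambda>x. \<Sum>i\<in>I. Y i x) = (\<Sum>i\<in>I. variance (Y i))"
  using assms(1) indep bnd
proof (induction I rule: finite_induct)
  case empty
  then show ?case by simp
next
  case (insert i I)
  have rv[measurable]: "\<And>k. k \<in> insert i I \<Longrightarrow> random_variable borel (Y k)"
    using insert.prems(1) unfolding indep_vars_def by auto
  have indI: "indep_vars (\<lambda>_. borel) Y I"
    by (rule indep_vars_subset[OF insert.prems(1)]) auto
  have IH: "variance (\<lambda>x. \<Sum>k\<in>I. Y k x) = (\<Sum>k\<in>I. variance (Y k))"
    using insert.IH[OF indI] insert.prems(2) by auto
  define A where "A = Y i"
  define S where "S = (\<lambda>x. \<Sum>k\<in>I. Y k x)"
  have A_meas[measurable]: "A \<in> borel_measurable M" unfolding A_def using rv by auto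
  have S_meas[measurable]: "S \<in> borel_measurable M" unfolding S_def using rv by auto
  have Abnd: "\<bar>A x\<bar> \<le> B" if "x \<in> space M" for x
    unfolding A_def using insert.prems(2) that by auto
  have Sbnd: "\<bar>S x\<bar> \<le> real (card I) * B" if "x \<in> space M" for x
  proof -
    have "\<bar>S x\<bar> \<le> (\<Sum>k\<in>I. \<bar>Y k x\<bar>)" unfolding S_def by (rule sum_abs)
    also have "\<dots> \<le> (\<Sum>k\<in>I. B)" using insert.prems(2) that by (intro sum_mono) auto
    finally show ?thesis by simp
  qed
  have intA: "integrable M A"
    by (rule integrable_const_bound[where B=B]) (auto intro!: AE_I2 simp: Abnd)
  have intS: "integrable M S"
    by (rule integrable_const_bound[where B="real (card I) * B"]) (auto intro!: AE_I2 simp: Sbnd)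
  define a where "a = expectation A"
  define s where "s = expectation S"
  have intA2: "integrable M (\<lambda>x. (A x - a)\<^sup>2)"
  proof (rule integrable_const_bound[where B="(B + \<bar>a\<bar>)\<^sup>2"])
    show "AE x in M. norm ((A x - a)\<^sup>2) \<le> (B + \<bar>a\<bar>)\<^sup>2"
    proof (intro AE_I2)
      fix x assume "x \<in> space M"
      then have "\<bar>A x - a\<bar> \<le> B + \<bar>a\<bar>" using Abnd[of x] by linarith
      then show "norm ((A x - a)\<^sup>2) \<le> (B + \<bar>a\<bar>)\<^sup>2"
        by (simp add: abs_le_square_iff power2_le_iff_abs_le)
    qed
  qed simp
  have intS2: "integrable M (\<lambda>x. (S x - s)\<^sup>2)"
  proof (rule integrable_const_bound[where B="(real (card I) * B + \<bar>s\<bar>)\<^sup>2"])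
    show "AE x in M. norm ((S x - s)\<^sup>2) \<le> (real (card I) * B + \<bar>s\<bar>)\<^sup>2"
    proof (intro AE_I2)
      fix x assume "x \<in> space M"
      then have "\<bar>S x - s\<bar> \<le> real (card I) * B + \<bar>s\<bar>" using Sbnd[of x] by linarith
      then show "norm ((S x - s)\<^sup>2) \<le> (real (card I) * B + \<bar>s\<bar>)\<^sup>2"
        by (simp add: abs_le_square_iff power2_le_iff_abs_le)
    qed
  qed simp
  have ind: "indep_var borel A borel S"
    unfolding A_def S_def using insert.hyps insert.prems(1) by (intro indep_vars_sum) auto
  have ind2: "indep_var borel (\<lambda>x. A x - a) borel (\<lambda>x. S x - s)"
    using indep_var_compose[OF ind, of "\<lambda>v. v - a" borel "\<lambda>v. v - s" borel]
    by (simp add: comp_def)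
  have intA': "integrable M (\<lambda>x. A x - a)" using intA by auto
  have intS': "integrable M (\<lambda>x. S x - s)" using intS by auto
  have cross: "expectation (\<lambda>x. (A x - a) * (S x - s)) = 0"
    using indep_var_lebesgue_integral[OF ind2 intA' intS'] intA intS
    by (simp add: a_def s_def prob_space)
  have intC: "integrable M (\<lambda>x. (A x - a) * (S x - s))"
    using indep_var_integrable[OF ind2 intA' intS'] .
  have sumeq: "(\<Sum>k\<in>insert i I. Y k x) = A x + S x" for x
    using insert.hyps by (simp add: A_def S_def)
  have Esum: "expectation (\<lambda>x. A x + S x) = a + s"
    using intA intS by (simp add: a_def s_def)
  have pt: "(A x + S x - (a + s))\<^sup>2 = (A x - a)\<^sup>2 + (S x - s)\<^sup>2 + 2 * ((A x - a) * (S x - s))" for x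
    by (simp add: power2_eq_square algebra_simps)
  have "variance (\<lambda>x. \<Sum>k\<in>insert i I. Y k x) = expectation (\<lambda>x. (A x - a)\<^sup>2 + (S x - s)\<^sup>2 + 2 * ((A x - a) * (S x - s)))"
    by (simp only: sumeq Esum pt)
  also have "\<dots> = expectation (\<lambda>x. (A x - a)\<^sup>2) + expectation (\<lambda>x. (S x - s)\<^sup>2) + 2 * expectation (\<lambda>x. (A x - a) * (S x - s))"
    using intA2 intS2 intC by simp
  also have "\<dots> = variance (Y i) + (\<Sum>k\<in>I. variance (Y k))"
    using IH cross by (simp add: A_def S_def a_def s_def)
  finally show ?case using insert.hyps by simp
qed

lemma (in prob_space) slln_bounded:
  fixes W :: "nat \<Rightarrow> 'a \<Rightarrow> real" and V :: "'a \<Rightarrow> real"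
  assumes indep: "indep_vars (\<lambda>_. borel) W UNIV"
    and distr: "\<And>i. distr M borel (W i) = distr M borel V"
    and rvV[measurable]: "random_variable borel V"
    and bnd: "\<And>x. x \<in> space M \<Longrightarrow> V x \<in> {a..b}" and ab: "a < b"
  shows "AE x in M. (\<lambda>n. (\<Sum>i<n. W i x) / real n) \<longlonglongrightarrow> expectation V"
proof -
  have rvW[measurable]: "\<And>i. random_variable borel (W i)"
    using indep unfolding indep_vars_def by auto
  define \<mu> where "\<mu> = expectation V"
  have key: "AE x in M. eventually (\<lambda>n. \<bar>(\<Sum>i<n. W i x) / real n - \<mu>\<bar> < e) sequentially"
    if e: "e > 0" for e
  proof -
    define A where "A n = {x\<in>space M. \<bar>(\<Sum>i\<in>{..<Suc n}. W i x) / real (card {..<Suc n}) - \<mu>\<bar> \<ge> e}" for n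
    have A_sets[measurable]: "A n \<in> sets M" for n unfolding A_def by measurable
    have probA: "prob (A n) \<le> 2 * exp (-2 * real (Suc n) * e\<^sup>2 / (b - a)\<^sup>2)" for n
    proof -
      interpret H: Hoeffding_ineq_iid M "{..<Suc n}" W V a b \<mu>
      proof unfold_locales
        show "indep_vars (\<lambda>_. borel) W {..<Suc n}"
          by (rule indep_vars_subset[OF indep]) auto
        show "AE x in M. V x \<in> {a..b}" using bnd by (intro AE_I2) auto
      qed (auto simp: distr \<mu>_def)
      have "{..<Suc n} \<noteq> {}" by auto
      then show ?thesis using H.Hoeffding_ineq_abs_ge'[of e] e ab unfolding A_def by simp
    qed
    define c where "c = 2 * e\<^sup>2 / (b - a)\<^sup>2"
    have c: "c > 0" using e ab unfolding c_def by auto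
    have sg: "summable (\<lambda>n. 2 * exp (-c) ^ Suc n)"
      using c by (intro summable_mult summable_Suc_iff[THEN iffD2] summable_geometric) auto
    have eq: "2 * exp (-2 * real (Suc n) * e\<^sup>2 / (b - a)\<^sup>2) = 2 * exp (-c) ^ Suc n" for n
    proof -
      have "-2 * real (Suc n) * e\<^sup>2 / (b - a)\<^sup>2 = -(real (Suc n) * (2 * e\<^sup>2) / (b - a)\<^sup>2)"
        by (simp only: mult_minus_left mult.assoc mult.left_commute[of 2] minus_divide_left)
      also have "\<dots> = real (Suc n) * (-c)"
        unfolding c_def by (simp only: times_divide_eq_right mult_minus_right)
      finally have "-2 * real (Suc n) * e\<^sup>2 / (b - a)\<^sup>2 = real (Suc n) * (-c)" .
      then show ?thesis by (simp only: exp_of_nat_mult)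
    qed
    have "summable (\<lambda>n. measure M (A n))"
    proof (rule summable_comparison_test'[where N=0])
      show "norm (measure M (A n)) \<le> 2 * exp (-c) ^ Suc n" for n
        using probA[of n] eq[of n] by simp
    qed (rule sg)
    then have "AE x in M. eventually (\<lambda>n. x \<in> space M - A n) sequentially"
      by (intro borel_cantelli_AE1) (simp_all add: emeasure_eq_measure)
    then show ?thesis
    proof (rule AE_mp, intro AE_I2 impI)
      fix x assume x: "x \<in> space M" and ev: "eventually (\<lambda>n. x \<in> space M - A n) sequentially"
      have "eventually (\<lambda>n. \<bar>(\<Sum>i<Suc n. W i x) / real (Suc n) - \<mu>\<bar> < e) sequentially"
        using ev by eventually_elim (use x in \<open>auto simp: A_def\<close>)
      then show "eventually (\<lambda>n. \<bar>(\<Sum>i<n. W i x) / real n - \<mu>\<bar> < e) sequentially"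
        by (subst eventually_sequentially_Suc[symmetric])
    qed
  qed
  have "AE x in M. \<forall>m::nat. eventually (\<lambda>n. \<bar>(\<Sum>i<n. W i x) / real n - \<mu>\<bar> < 1 / Suc m) sequentially"
    by (subst AE_all_countable) (auto intro!: key)
  then show ?thesis
  proof (rule AE_mp, intro AE_I2 impI)
    fix x assume H: "\<forall>m::nat. eventually (\<lambda>n. \<bar>(\<Sum>i<n. W i x) / real n - \<mu>\<bar> < 1 / Suc m) sequentially"
    show "(\<lambda>n. (\<Sum>i<n. W i x) / real n) \<longlonglongrightarrow> expectation V"
      unfolding \<mu>_def[symmetric]
    proof (rule tendstoI)
      fix e :: real assume "e > 0"
      then obtain m :: nat where m: "1 / Suc m < e"
        using nat_approx_posE by blast
      show "eventually (\<lambda>n. dist ((\<Sum>i<n. W i x) / real n) \<mu> < e) sequentially"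
        using H[rule_format, of m] by eventually_elim (use m in \<open>auto simp: dist_real_def\<close>)
    qed
  qed
qed

lemma (in prob_space) integrable_bnd:
  fixes f :: "'a \<Rightarrow> real"
  assumes "f \<in> borel_measurable M" "\<And>x. x \<in> space M \<Longrightarrow> \<bar>f x\<bar> \<le> B"
  shows "integrable M f"
  by (rule integrable_const_bound[where B=B]) (use assms in \<open>auto intro!: AE_I2\<close>)

lemma (in prob_space) distr_expectation_eq:
  fixes f :: "real \<Rightarrow> real"
  assumes "distr M borel Z = distr M borel V" "Z \<in> borel_measurable M" "V \<in> borel_measurable M"
    "f \<in> borel_measurable borel"
  shows "expectation (\<lambda>x. f (Z x)) = expectation (\<lambda>x. f (V x))"
proof -
  have "expectation (\<lambda>x. f (Z x)) = integral\<^sup>L (distr M borel Z) f"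
    using assms by (intro integral_distr[symmetric]) auto
  also have "\<dots> = integral\<^sup>L (distr M borel V) f" using assms(1) by simp
  also have "\<dots> = expectation (\<lambda>x. f (V x))"
    using assms by (intro integral_distr) auto
  finally show ?thesis .
qed

lemma (in prob_space) distr_prob_gt_eq:
  fixes Z V :: "'a \<Rightarrow> real" and t :: real
  assumes "distr M borel Z = distr M borel V" "Z \<in> borel_measurable M" "V \<in> borel_measurable M"
  shows "prob {x\<in>space M. t < Z x} = prob {x\<in>space M. t < V x}"
proof -
  have [measurable]: "{t<..} \<in> sets (borel :: real measure)" by (rule borel_open) simp
  have "prob {x\<in>space M. t < Z x} = measure (distr M borel Z) {t<..}"
    using assms by (subst measure_distr) (auto intro!: arg_cong[where f=prob])
  also have "\<dots> = measure (distr M borel V) {t<..}" using assms(1) by simp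
  also have "\<dots> = prob {x\<in>space M. t < V x}"
    using assms by (subst measure_distr) (auto intro!: arg_cong[where f=prob])
  finally show ?thesis .
qed

lemma (in prob_space) slln_crude:
  fixes W :: "nat \<Rightarrow> 'a \<Rightarrow> real" and V :: "'a \<Rightarrow> real"
  assumes indep: "indep_vars (\<lambda>_. borel) W UNIV"
    and distr: "\<And>i. distr M borel (W i) = distr M borel V"
    and rvV[measurable]: "random_variable borel V"
    and Vnn: "\<And>x. x \<in> space M \<Longrightarrow> V x \<ge> 0"
    and Wnn: "\<And>i x. x \<in> space M \<Longrightarrow> W i x \<ge> 0"
    and intV: "integrable M V"
  shows "AE x in M. \<forall>e>0. eventually (\<lambda>n. (\<Sum>i<n. W i x) / real n \<le> 2 * expectation V + e) sequentially"
proof -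
  have rvW[measurable]: "\<And>i. random_variable borel (W i)"
    using indep unfolding indep_vars_def by auto
  define \<mu> where "\<mu> = expectation V"
  have \<mu>_nn: "\<mu> \<ge> 0" unfolding \<mu>_def using Vnn by (intro integral_nonneg_AE AE_I2) auto
  define tr :: "nat \<Rightarrow> real \<Rightarrow> real" where "tr j v = (if v \<le> 2^j then v else 0)" for j v
  have tr_meas[measurable]: "tr j \<in> borel_measurable borel" for j
    unfolding tr_def by measurable
  define Bad where "Bad j = (\<Union>i<2^j. {x\<in>space M. 2^j < W i x})" for j :: nat
  have Bad_sets[measurable]: "Bad j \<in> sets M" for j unfolding Bad_def by measurable
  have probBad: "prob (Bad j) \<le> 2^j * prob {x\<in>space M. 2^j < V x}" for j
  proof -
    have "prob (Bad j) \<le> (\<Sum>i<2^j. prob {x\<in>space M. 2^j < W i x})"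
      unfolding Bad_def by (intro finite_measure_subadditive_finite) auto
    also have "\<dots> = (\<Sum>i<(2::nat)^j. prob {x\<in>space M. 2^j < V x})"
      by (intro sum.cong refl distr_prob_gt_eq distr) auto
    finally show ?thesis by simp
  qed
  have sumBad: "summable (\<lambda>j. prob (Bad j))"
  proof (rule summable_comparison_test'[where N=0])
    show "summable (\<lambda>j. (2::real)^j * prob {x\<in>space M. 2^j < V x})"
    proof (rule summableI_nonneg_bounded[where x="2 * \<mu>"])
      show "0 \<le> (2::real)^j * prob {x\<in>space M. 2^j < V x}" for j by simp
      fix J :: nat
      have intI: "integrable M (\<lambda>x. (2::real)^j * indicator {x\<in>space M. 2^j < V x} x)" for j :: nat
        by (rule integrable_bnd[where B="2^j"]) (auto simp: indicator_def)
      have "(\<Sum>j<J. (2::real)^j * prob {x\<in>space M. 2^j < V x})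
           = expectation (\<lambda>x. \<Sum>j<J. (2::real)^j * indicator {x\<in>space M. 2^j < V x} x)"
        using intI by (subst Bochner_Integration.integral_sum) (auto simp: integral_indicator Int_absorb2)
      also have "\<dots> \<le> expectation (\<lambda>x. 2 * V x)"
      proof (rule integral_mono)
        show "integrable M (\<lambda>x. \<Sum>j<J. (2::real)^j * indicator {x\<in>space M. 2^j < V x} x)"
          by (intro Bochner_Integration.integrable_sum intI)
        show "integrable M (\<lambda>x. 2 * V x)" using intV by auto
        fix x assume x: "x \<in> space M"
        have "(\<Sum>j<J. (2::real)^j * indicator {x\<in>space M. 2^j < V x} x) = (\<Sum>j<J. if V x > 2^j then 2^j else 0)"
          using x by (intro sum.cong) (auto simp: indicator_def)
        also have "\<dots> \<le> 2 * V x" using geom_bound1[OF Vnn[OF x]] .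
        finally show "(\<Sum>j<J. (2::real)^j * indicator {x\<in>space M. 2^j < V x} x) \<le> 2 * V x" .
      qed
      also have "\<dots> = 2 * \<mu>" unfolding \<mu>_def by simp
      finally show "(\<Sum>j<J. (2::real)^j * prob {x\<in>space M. 2^j < V x}) \<le> 2 * \<mu>" .
    qed
    show "norm (prob (Bad j)) \<le> 2^j * prob {x\<in>space M. 2^j < V x}" for j
      using probBad[of j] by simp
  qed
  have AEBad: "AE x in M. eventually (\<lambda>j. x \<in> space M - Bad j) sequentially"
    using sumBad by (intro borel_cantelli_AE1) (simp_all add: emeasure_eq_measure)
  define Y where "Y j i x = tr j (W i x)" for j i x
  define T where "T j x = (\<Sum>i<2^j. Y j i x)" for j x
  have Y_meas[measurable]: "Y j i \<in> borel_measurable M" for j i unfolding Y_def by measurable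
  have T_meas[measurable]: "T j \<in> borel_measurable M" for j unfolding T_def by measurable
  have tr_bnd: "0 \<le> tr j v \<and> tr j v \<le> 2^j \<and> tr j v \<le> v" if "v \<ge> 0" for j v
    using that unfolding tr_def by auto
  have Ybnd: "\<bar>Y j i x\<bar> \<le> 2^j" if "x \<in> space M" for j i x
    using tr_bnd[OF Wnn[OF that]] unfolding Y_def by auto
  have indY: "indep_vars (\<lambda>_. borel) (Y j) UNIV" for j
    using indep_vars_compose2[OF indep, of "\<lambda>i. tr j" "\<lambda>_. borel"] unfolding Y_def by auto
  define q where "q j = expectation (\<lambda>x. (tr j (V x))\<^sup>2)" for j
  have EY: "expectation (Y j i) = expectation (\<lambda>x. tr j (V x))" for j i
    unfolding Y_def by (rule distr_expectation_eq[OF distr]) auto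
  have EY2: "expectation (\<lambda>x. (Y j i x)\<^sup>2) = q j" for j i
    unfolding Y_def q_def by (rule distr_expectation_eq[OF distr, where f="\<lambda>v. (tr j v)\<^sup>2"]) auto
  have intY: "integrable M (Y j i)" for j i
    by (rule integrable_bnd[where B="2^j"]) (auto simp: Ybnd)
  have intY2: "integrable M (\<lambda>x. (Y j i x)\<^sup>2)" for j i
  proof (rule integrable_bnd[where B="(2^j)\<^sup>2"])
    fix x assume "x \<in> space M"
    then have "\<bar>Y j i x\<bar> \<le> 2^j" by (rule Ybnd)
    then show "\<bar>(Y j i x)\<^sup>2\<bar> \<le> (2^j)\<^sup>2" by (simp add: abs_le_square_iff power2_le_iff_abs_le)
  qed simp
  have varY: "variance (Y j i) \<le> q j" for j i
  proof -
    have "variance (Y j i) = expectation (\<lambda>x. (Y j i x)\<^sup>2) - (expectation (Y j i))\<^sup>2"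
      by (rule variance_eq[OF intY intY2])
    then show ?thesis using EY2[of j i] by simp
  qed
  have varT: "variance (T j) \<le> 2^j * q j" for j
  proof -
    have "variance (T j) = (\<Sum>i<2^j. variance (Y j i))"
      unfolding T_def
      by (rule variance_sum_indep[where B="2^j"]) (auto intro: indep_vars_subset[OF indY] Ybnd)
    also have "\<dots> \<le> (\<Sum>i<(2::nat)^j. q j)" by (intro sum_mono varY)
    finally show ?thesis by simp
  qed
  have ET: "expectation (T j) \<le> 2^j * \<mu>" for j
  proof -
    have "expectation (T j) = (\<Sum>i<2^j. expectation (Y j i))"
      unfolding T_def by (rule Bochner_Integration.integral_sum) (rule intY)
    also have "\<dots> = 2^j * expectation (\<lambda>x. tr j (V x))" by (simp add: EY)
    also have "expectation (\<lambda>x. tr j (V x)) \<le> \<mu>"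
      unfolding \<mu>_def
    proof (rule integral_mono[OF _ intV])
      show "integrable M (\<lambda>x. tr j (V x))"
        by (rule integrable_bnd[where B="2^j"]) (use tr_bnd Vnn in \<open>auto simp: abs_le_iff\<close>)
      show "tr j (V x) \<le> V x" if "x \<in> space M" for x using tr_bnd[OF Vnn[OF that]] by auto
    qed
    finally show ?thesis by simp
  qed
  have sumq: "summable (\<lambda>j. q j / 2^j)"
  proof (rule summableI_nonneg_bounded[where x="2 * \<mu>"])
    show "0 \<le> q j / 2^j" for j unfolding q_def by (intro divide_nonneg_pos integral_nonneg_AE AE_I2) auto
    fix J :: nat
    have intq: "integrable M (\<lambda>x. (tr j (V x))\<^sup>2 / 2^j)" for j
    proof (rule integrable_bnd[where B="(2^j)\<^sup>2"])
      fix x assume x: "x \<in> space M"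
      have "\<bar>tr j (V x)\<bar> \<le> 2^j" using tr_bnd[OF Vnn[OF x]] by auto
      then have "(tr j (V x))\<^sup>2 \<le> (2^j)\<^sup>2" by (simp add: abs_le_square_iff power2_le_iff_abs_le)
      moreover have "(tr j (V x))\<^sup>2 / 2^j \<le> (tr j (V x))\<^sup>2 / 1"
        by (rule divide_left_mono) auto
      ultimately show "\<bar>(tr j (V x))\<^sup>2 / 2^j\<bar> \<le> (2^j)\<^sup>2" by simp
    qed simp
    have "(\<Sum>j<J. q j / 2^j) = expectation (\<lambda>x. \<Sum>j<J. (tr j (V x))\<^sup>2 / 2^j)"
      unfolding q_def using intq by (subst Bochner_Integration.integral_sum) auto
    also have "\<dots> \<le> expectation (\<lambda>x. 2 * V x)"
    proof (rule integral_mono)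
      show "integrable M (\<lambda>x. \<Sum>j<J. (tr j (V x))\<^sup>2 / 2^j)"
        by (intro Bochner_Integration.integrable_sum intq)
      show "integrable M (\<lambda>x. 2 * V x)" using intV by auto
      fix x assume x: "x \<in> space M"
      have "(\<Sum>j<J. (tr j (V x))\<^sup>2 / 2^j) = (\<Sum>j<J. (if V x \<le> 2^j then (V x)\<^sup>2 else 0) / 2^j)"
        by (intro sum.cong) (auto simp: tr_def)
      also have "\<dots> \<le> 2 * V x" using geom_bound2[OF Vnn[OF x]] .
      finally show "(\<Sum>j<J. (tr j (V x))\<^sup>2 / 2^j) \<le> 2 * V x" .
    qed
    also have "\<dots> = 2 * \<mu>" unfolding \<mu>_def by simp
    finally show "(\<Sum>j<J. q j / 2^j) \<le> 2 * \<mu>" .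
  qed
  have AEdev: "AE x in M. eventually (\<lambda>j. \<bar>T j x - expectation (T j)\<bar> < e * 2^j) sequentially"
    if e: "e > 0" for e
  proof -
    define D where "D j = {x\<in>space M. \<bar>T j x - expectation (T j)\<bar> \<ge> e * 2^j}" for j
    have D_sets[measurable]: "D j \<in> sets M" for j unfolding D_def by measurable
    have intT2: "integrable M (\<lambda>x. (T j x)^2)" for j
    proof (rule integrable_bnd[where B="(2^j * 2^j)\<^sup>2"])
      fix x assume x: "x \<in> space M"
      have "\<bar>T j x\<bar> \<le> (\<Sum>i<(2::nat)^j. \<bar>Y j i x\<bar>)" unfolding T_def by (rule sum_abs)
      also have "\<dots> \<le> (\<Sum>i<(2::nat)^j. 2^j)" by (intro sum_mono Ybnd x)
      finally have "\<bar>T j x\<bar> \<le> 2^j * 2^j" by simp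
      then show "\<bar>(T j x)^2\<bar> \<le> (2^j * 2^j)\<^sup>2" by (simp add: abs_le_square_iff power2_le_iff_abs_le)
    qed simp
    have probD: "prob (D j) \<le> q j / 2^j / e\<^sup>2" for j
    proof -
      have "prob (D j) \<le> variance (T j) / (e * 2^j)\<^sup>2"
        unfolding D_def by (rule Chebyshev_inequality) (use e intT2 in auto)
      also have "\<dots> \<le> 2^j * q j / (e * 2^j)\<^sup>2"
        by (intro divide_right_mono varT) auto
      also have "\<dots> = q j / 2^j / e\<^sup>2"
        using e by (simp add: power2_eq_square field_simps)
      finally show ?thesis .
    qed
    have "summable (\<lambda>j. prob (D j))"
    proof (rule summable_comparison_test'[where N=0])
      show "summable (\<lambda>j. q j / 2^j / e\<^sup>2)" using sumq by (rule summable_divide)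
      show "norm (prob (D j)) \<le> q j / 2^j / e\<^sup>2" for j using probD[of j] by simp
    qed
    then have "AE x in M. eventually (\<lambda>j. x \<in> space M - D j) sequentially"
      by (intro borel_cantelli_AE1) (simp_all add: emeasure_eq_measure)
    then show ?thesis
      by (rule AE_mp) (intro AE_I2 impI, elim eventually_mono, auto simp: D_def)
  qed
  define S where "S n x = (\<Sum>i<n. W i x)" for n x
  have key: "AE x in M. eventually (\<lambda>j. S (2^j) x \<le> 2^j * (\<mu> + e)) sequentially" if e: "e > 0" for e
  proof -
    have "AE x in M. eventually (\<lambda>j. x \<in> space M - Bad j) sequentially \<and>
        eventually (\<lambda>j. \<bar>T j x - expectation (T j)\<bar> < e * 2^j) sequentially"
      using AEBad AEdev[OF e] by eventually_elim auto
    then show ?thesis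
    proof (rule AE_mp, intro AE_I2 impI)
      fix x assume x: "x \<in> space M"
      assume "eventually (\<lambda>j. x \<in> space M - Bad j) sequentially \<and>
        eventually (\<lambda>j. \<bar>T j x - expectation (T j)\<bar> < e * 2^j) sequentially"
      then have "eventually (\<lambda>j. x \<in> space M - Bad j \<and> \<bar>T j x - expectation (T j)\<bar> < e * 2^j) sequentially"
        by (simp add: eventually_conj_iff)
      then show "eventually (\<lambda>j. S (2^j) x \<le> 2^j * (\<mu> + e)) sequentially"
      proof (rule eventually_mono)
        fix j assume j: "x \<in> space M - Bad j \<and> \<bar>T j x - expectation (T j)\<bar> < e * 2^j"
        have "S (2^j) x = T j x"
          unfolding S_def T_def
        proof (rule sum.cong[OF refl])
          fix i assume "i \<in> {..<(2::nat)^j}"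
          then have "W i x \<le> 2^j" using j x unfolding Bad_def by (auto simp: not_less)
          then show "W i x = Y j i x" unfolding Y_def tr_def by simp
        qed
        also have "\<dots> \<le> expectation (T j) + e * 2^j" using j by linarith
        also have "\<dots> \<le> 2^j * \<mu> + e * 2^j" using ET[of j] by linarith
        finally show "S (2^j) x \<le> 2^j * (\<mu> + e)" by (simp add: algebra_simps)
      qed
    qed
  qed
  have "AE x in M. \<forall>m::nat. eventually (\<lambda>j. S (2^j) x \<le> 2^j * (\<mu> + 1 / Suc m)) sequentially"
    by (subst AE_all_countable) (auto intro!: key)
  then show ?thesis
  proof (rule AE_mp, intro AE_I2 impI)
    fix x assume x: "x \<in> space M"
      and H: "\<forall>m::nat. eventually (\<lambda>j. S (2^j) x \<le> 2^j * (\<mu> + 1 / Suc m)) sequentially"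
    show "\<forall>e>0. eventually (\<lambda>n. (\<Sum>i<n. W i x) / real n \<le> 2 * expectation V + e) sequentially"
    proof (intro allI impI)
      fix e :: real assume e: "e > 0"
      obtain m :: nat where m: "1 / Suc m < e / 2"
        using nat_approx_posE[of "e/2"] e by auto
      define d where "d = 1 / real (Suc m)"
      have d: "d > 0" "2 * d < e" using m unfolding d_def by auto
      obtain J where J: "\<And>j. j \<ge> J \<Longrightarrow> S (2^j) x \<le> 2^j * (\<mu> + d)"
        using H[rule_format, of m] unfolding eventually_sequentially d_def by auto
      show "eventually (\<lambda>n. (\<Sum>i<n. W i x) / real n \<le> 2 * expectation V + e) sequentially"
        unfolding eventually_sequentially
      proof (intro exI[of _ "max 1 (2^J)"] allI impI)
        fix n :: nat assume n: "max 1 (2^J) \<le> n"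
        then have n1: "n \<ge> 1" and nJ: "2^J \<le> n" by (simp_all only: max.bounded_iff)
        obtain k where k: "n < 2^k" "2^k \<le> 2 * n" using pow2_bracket[OF n1] by auto
        have "(2::nat)^J < 2^k" using nJ k by linarith
        then have kJ: "J \<le> k" using power_less_imp_less_exp[of 2 J k] by auto
        have "S n x \<le> S (2^k) x"
          unfolding S_def using k x by (intro sum_mono2) (auto intro: Wnn)
        also have "\<dots> \<le> 2^k * (\<mu> + d)" by (rule J[OF kJ])
        also have "\<dots> \<le> real (2 * n) * (\<mu> + d)"
        proof (rule mult_right_mono)
          have "real (2^k) \<le> real (2 * n)" using k(2) by (simp only: of_nat_le_iff)
          then show "(2::real)^k \<le> real (2 * n)" by simp
        qed (use \<mu>_nn d in auto)
        finally have "S n x \<le> real n * (2 * \<mu> + 2 * d)" by (simp add: algebra_simps)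
        then have "S n x / real n \<le> 2 * \<mu> + 2 * d"
          using n1 by (simp add: divide_le_eq mult.commute)
        then show "(\<Sum>i<n. W i x) / real n \<le> 2 * expectation V + e"
          using d unfolding S_def \<mu>_def by linarith
      qed
    qed
  qed
qed

lemma (in prob_space) distr_compose_eq:
  fixes Z V :: "'a \<Rightarrow> real" and f :: "real \<Rightarrow> real"
  assumes "distr M borel Z = distr M borel V" "Z \<in> borel_measurable M" "V \<in> borel_measurable M"
    "f \<in> borel_measurable borel"
  shows "distr M borel (\<lambda>x. f (Z x)) = distr M borel (\<lambda>x. f (V x))"
proof -
  have "distr M borel (\<lambda>x. f (Z x)) = distr (distr M borel Z) borel f"
    using assms by (subst distr_distr) (auto simp: comp_def)
  also have "\<dots> = distr (distr M borel V) borel f" using assms(1) by simp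
  also have "\<dots> = distr M borel (\<lambda>x. f (V x))"
    using assms by (subst distr_distr) (auto simp: comp_def)
  finally show ?thesis .
qed

lemma (in prob_space) slln_upper:
  fixes W :: "nat \<Rightarrow> 'a \<Rightarrow> real" and V :: "'a \<Rightarrow> real"
  assumes indep: "indep_vars (\<lambda>_. borel) W UNIV"
    and distr: "\<And>i. distr M borel (W i) = distr M borel V"
    and rvV[measurable]: "random_variable borel V"
    and Vnn: "\<And>x. x \<in> space M \<Longrightarrow> V x \<ge> 0"
    and Wnn: "\<And>i x. x \<in> space M \<Longrightarrow> W i x \<ge> 0"
    and intV: "integrable M V"
  shows "AE x in M. \<forall>e>0. eventually (\<lambda>n. (\<Sum>i<n. W i x) / real n \<le> expectation V + e) sequentially"
proof -
  have rvW[measurable]: "\<And>i. random_variable borel (W i)"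
    using indep unfolding indep_vars_def by auto
  define fb :: "nat \<Rightarrow> real \<Rightarrow> real" where "fb K v = min v (real (Suc K))" for K v
  define ft :: "nat \<Rightarrow> real \<Rightarrow> real" where "ft K v = v - min v (real (Suc K))" for K v
  have fb_meas[measurable]: "fb K \<in> borel_measurable borel" for K unfolding fb_def by measurable
  have ft_meas[measurable]: "ft K \<in> borel_measurable borel" for K unfolding ft_def by measurable
  have intVb: "integrable M (\<lambda>x. fb K (V x))" for K
    by (rule integrable_bnd[where B="real (Suc K)"]) (use Vnn in \<open>auto simp: fb_def\<close>)
  have intVt: "integrable M (\<lambda>x. ft K (V x))" for K
    unfolding ft_def using intV intVb[of K] unfolding fb_def by auto
  have Esplit: "expectation V = expectation (\<lambda>x. fb K (V x)) + expectation (\<lambda>x. ft K (V x))" for K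
  proof -
    have "expectation V = expectation (\<lambda>x. fb K (V x) + ft K (V x))"
      by (simp add: fb_def ft_def)
    also have "\<dots> = expectation (\<lambda>x. fb K (V x)) + expectation (\<lambda>x. ft K (V x))"
      using intVb intVt by simp
    finally show ?thesis .
  qed
  have Et_nn: "expectation (\<lambda>x. ft K (V x)) \<ge> 0" for K
    by (intro integral_nonneg_AE AE_I2) (auto simp: ft_def)
  have Et_lim: "(\<lambda>K. expectation (\<lambda>x. ft K (V x))) \<longlonglongrightarrow> expectation (\<lambda>x. 0)"
  proof (rule integral_dominated_convergence[where w=V])
    show "AE x in M. (\<lambda>K. ft K (V x)) \<longlonglongrightarrow> 0"
    proof (intro AE_I2)
      fix x assume x: "x \<in> space M"
      obtain N :: nat where "V x < real N" using reals_Archimedean2 by blast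
      then have "eventually (\<lambda>K. ft K (V x) = 0) sequentially"
        unfolding eventually_sequentially by (intro exI[of _ N]) (auto simp: ft_def)
      then show "(\<lambda>K. ft K (V x)) \<longlonglongrightarrow> 0" by (rule tendsto_eventually)
    qed
    show "AE x in M. norm (ft K (V x)) \<le> V x" for K
      using Vnn by (intro AE_I2) (auto simp: ft_def)
  qed (use intV in auto)
  have AEb: "AE x in M. (\<lambda>n. (\<Sum>i<n. fb K (W i x)) / real n) \<longlonglongrightarrow> expectation (\<lambda>x. fb K (V x))" for K
  proof (rule slln_bounded[where a=0 and b="real (Suc K)"])
    show "indep_vars (\<lambda>_. borel) (\<lambda>i x. fb K (W i x)) UNIV"
      by (rule indep_vars_compose2[OF indep]) auto
    show "distr M borel (\<lambda>x. fb K (W i x)) = distr M borel (\<lambda>x. fb K (V x))" for i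
      by (rule distr_compose_eq[OF distr]) auto
  qed (use Vnn in \<open>auto simp: fb_def\<close>)
  have AEt: "AE x in M. \<forall>e>0. eventually (\<lambda>n. (\<Sum>i<n. ft K (W i x)) / real n \<le> 2 * expectation (\<lambda>x. ft K (V x)) + e) sequentially" for K
  proof (rule slln_crude)
    show "indep_vars (\<lambda>_. borel) (\<lambda>i x. ft K (W i x)) UNIV"
      by (rule indep_vars_compose2[OF indep]) auto
    show "distr M borel (\<lambda>x. ft K (W i x)) = distr M borel (\<lambda>x. ft K (V x))" for i
      by (rule distr_compose_eq[OF distr]) auto
    show "integrable M (\<lambda>x. ft K (V x))" by (rule intVt)
  qed (auto simp: ft_def)
  have "AE x in M. \<forall>K. ((\<lambda>n. (\<Sum>i<n. fb K (W i x)) / real n) \<longlonglongrightarrow> expectation (\<lambda>x. fb K (V x))) \<and>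
     (\<forall>e>0. eventually (\<lambda>n. (\<Sum>i<n. ft K (W i x)) / real n \<le> 2 * expectation (\<lambda>x. ft K (V x)) + e) sequentially)"
    by (subst AE_all_countable) (intro allI AE_conjI AEb AEt)
  then show ?thesis
  proof (rule AE_mp, intro AE_I2 impI)
    fix x assume x: "x \<in> space M"
    assume H: "\<forall>K. ((\<lambda>n. (\<Sum>i<n. fb K (W i x)) / real n) \<longlonglongrightarrow> expectation (\<lambda>x. fb K (V x))) \<and>
     (\<forall>e>0. eventually (\<lambda>n. (\<Sum>i<n. ft K (W i x)) / real n \<le> 2 * expectation (\<lambda>x. ft K (V x)) + e) sequentially)"
    show "\<forall>e>0. eventually (\<lambda>n. (\<Sum>i<n. W i x) / real n \<le> expectation V + e) sequentially"
    proof (intro allI impI)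
      fix e :: real assume e: "e > 0"
      have "eventually (\<lambda>K. expectation (\<lambda>x. ft K (V x)) < e / 3) sequentially"
      proof -
        have "e / 3 > 0" using e by simp
        moreover have "(\<lambda>K. expectation (\<lambda>x. ft K (V x))) \<longlonglongrightarrow> 0" using Et_lim by simp
        ultimately show ?thesis using order_tendstoD(2) by blast
      qed
      then obtain K where K: "expectation (\<lambda>x. ft K (V x)) < e / 3"
        by (auto simp: eventually_sequentially)
      have ev1: "eventually (\<lambda>n. (\<Sum>i<n. fb K (W i x)) / real n < expectation (\<lambda>x. fb K (V x)) + e / 3) sequentially"
        using H[rule_format, of K] e by (auto simp: order_tendsto_iff)
      have ev2: "eventually (\<lambda>n. (\<Sum>i<n. ft K (W i x)) / real n \<le> 2 * expectation (\<lambda>x. ft K (V x)) + e / 3) sequentially"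
        using H e by auto
      show "eventually (\<lambda>n. (\<Sum>i<n. W i x) / real n \<le> expectation V + e) sequentially"
        using ev1 ev2
      proof eventually_elim
        case (elim n)
        have "(\<Sum>i<n. W i x) / real n = (\<Sum>i<n. fb K (W i x)) / real n + (\<Sum>i<n. ft K (W i x)) / real n"
          by (simp add: fb_def ft_def sum.distrib[symmetric] add_divide_distrib[symmetric])
        then show ?case using elim K Et_nn[of K] Esplit[of K] by linarith
      qed
    qed
  qed
qed

definition cnt :: "real list \<Rightarrow> real \<Rightarrow> nat" where
  "cnt ys z = length (filter (\<lambda>v. z < v) ys)"

definition est_sum :: "(real \<Rightarrow> real) \<Rightarrow> nat \<Rightarrow> real list \<Rightarrow> real" where
  "est_sum w n ys = (\<Sum>j<length ys. ys ! j * (w (real (length ys - j) / real n) - w ((real (length ys - j) - 1) / real n)))"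

lemma integral_indicator_Ico:
  fixes y c :: real assumes "y \<ge> 0"
  shows "integrable lborel (\<lambda>z. indicator {0..<y} z * c)"
    and "integral\<^sup>L lborel (\<lambda>z. indicator {0..<y} z * c) = y * c"
proof -
  have i: "integrable lborel (indicator {0..<y} :: real \<Rightarrow> real)"
    by (rule integrable_real_indicator) (use assms in auto)
  then show "integrable lborel (\<lambda>z. indicator {0..<y} z * c)" by auto
  have "integral\<^sup>L lborel (\<lambda>z. indicator {0..<y} z * c) = integral\<^sup>L lborel (indicator {0..<y} :: real \<Rightarrow> real) * c"
    by simp
  also have "\<dots> = y * c" using assms by (simp add: integral_indicator)
  finally show "integral\<^sup>L lborel (\<lambda>z. indicator {0..<y} z * c) = y * c" .
qed

lemma est_sum_integral:
  fixes w :: "real \<Rightarrow> real"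
  assumes "sorted ys" "\<forall>v\<in>set ys. v \<ge> 0" "w 0 = 0"
  shows "integrable lborel (\<lambda>z. indicator {0..} z * w (real (cnt ys z) / real n)) \<and>
    est_sum w n ys = integral\<^sup>L lborel (\<lambda>z. indicator {0..} z * w (real (cnt ys z) / real n))"
  using assms(1,2)
proof (induction ys)
  case Nil
  then show ?case using assms(3) by (simp add: cnt_def est_sum_def)
next
  case (Cons y zs)
  define L where "L = length zs"
  have y0: "y \<ge> 0" and zs0: "\<forall>v\<in>set zs. v \<ge> 0" using Cons.prems by auto
  have yle: "\<forall>v\<in>set zs. y \<le> v" and szs: "sorted zs" using Cons.prems by auto
  have IH: "integrable lborel (\<lambda>z. indicator {0..} z * w (real (cnt zs z) / real n))"
    "est_sum w n zs = integral\<^sup>L lborel (\<lambda>z. indicator {0..} z * w (real (cnt zs z) / real n))"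
    using Cons.IH[OF szs zs0] by auto
  define c where "c = w (real (Suc L) / real n) - w (real L / real n)"
  have cnt_lt: "cnt zs z = L" if "z < y" for z
  proof -
    have "filter (\<lambda>v. z < v) zs = zs" using yle that by (intro filter_True) auto
    then show ?thesis by (simp add: cnt_def L_def)
  qed
  have pt: "indicator {0..} z * w (real (cnt (y # zs) z) / real n) =
      indicator {0..} z * w (real (cnt zs z) / real n) + indicator {0..<y} z * c" for z
  proof (cases "z < y")
    case True
    then show ?thesis using cnt_lt[OF True] by (auto simp: cnt_def c_def indicator_def)
  next
    case False
    then show ?thesis by (auto simp: cnt_def indicator_def)
  qed
  have intC: "integrable lborel (\<lambda>z. indicator {0..<y} z * c)"
    using integral_indicator_Ico[OF y0] by auto
  have int: "integrable lborel (\<lambda>z. indicator {0..} z * w (real (cnt (y # zs) z) / real n))"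
    unfolding pt using IH(1) intC by auto
  have "integral\<^sup>L lborel (\<lambda>z. indicator {0..} z * w (real (cnt (y # zs) z) / real n)) =
      integral\<^sup>L lborel (\<lambda>z. indicator {0..} z * w (real (cnt zs z) / real n)) + y * c"
    unfolding pt using IH(1) intC integral_indicator_Ico(2)[OF y0] by simp
  also have "\<dots> = est_sum w n zs + y * c" using IH(2) by simp
  also have "\<dots> = est_sum w n (y # zs)"
  proof -
    have "est_sum w n (y # zs) = (\<Sum>j<Suc L. (y # zs) ! j * (w (real (Suc L - j) / real n) - w ((real (Suc L - j) - 1) / real n)))"
      by (simp add: est_sum_def L_def)
    also have "\<dots> = y * (w (real (Suc L - 0) / real n) - w ((real (Suc L - 0) - 1) / real n)) +
        (\<Sum>j<L. zs ! j * (w (real (L - j) / real n) - w ((real (L - j) - 1) / real n)))"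
      by (simp only: sum.lessThan_Suc_shift nth_Cons_0 nth_Cons_Suc diff_Suc_Suc)
    also have "\<dots> = y * c + est_sum w n zs"
      by (simp add: c_def est_sum_def L_def)
    finally show ?thesis by simp
  qed
  finally show ?case using int by simp
qed

lemma gen_dct:
  fixes f g :: "nat \<Rightarrow> 'b \<Rightarrow> real" and fl gl :: "'b \<Rightarrow> real"
  assumes fi: "\<And>n. integrable N (f n)" and fli: "integrable N fl"
    and gi: "\<And>n. integrable N (g n)" and gli: "integrable N gl"
    and cf: "AE z in N. (\<lambda>n. f n z) \<longlonglongrightarrow> fl z"
    and cg: "AE z in N. (\<lambda>n. g n z) \<longlonglongrightarrow> gl z"
    and dom: "\<And>n. AE z in N. \<bar>f n z\<bar> \<le> g n z"
    and ls: "\<And>e. e > 0 \<Longrightarrow> eventually (\<lambda>n. integral\<^sup>L N (g n) \<le> integral\<^sup>L N gl + e) sequentially"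
  shows "(\<lambda>n. integral\<^sup>L N (f n)) \<longlonglongrightarrow> integral\<^sup>L N fl"
proof -
  have domall: "AE z in N. \<forall>n. \<bar>f n z\<bar> \<le> g n z"
    using dom by (subst AE_all_countable) auto
  have flgl: "AE z in N. \<bar>fl z\<bar> \<le> gl z \<and> gl z \<ge> 0"
    using cf cg domall
  proof eventually_elim
    case (elim z)
    have "(\<lambda>n. \<bar>f n z\<bar>) \<longlonglongrightarrow> \<bar>fl z\<bar>" using elim(1) by (rule tendsto_rabs)
    then have "\<bar>fl z\<bar> \<le> gl z"
      using elim(2) elim(3) by (intro LIMSEQ_le) auto
    then show ?case by linarith
  qed
  have gnn: "AE z in N. \<forall>n. g n z \<ge> 0"
    using domall by eventually_elim (auto intro: order_trans[OF abs_ge_zero])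
  have mi: "integrable N (\<lambda>z. min (g n z) (gl z))" for n
    using gi gli by (rule integrable_min)
  have min_lim: "(\<lambda>n. integral\<^sup>L N (\<lambda>z. min (g n z) (gl z))) \<longlonglongrightarrow> integral\<^sup>L N gl"
  proof (rule integral_dominated_convergence[where w=gl])
    show "AE z in N. (\<lambda>n. min (g n z) (gl z)) \<longlonglongrightarrow> gl z"
      using cg by eventually_elim (auto intro: tendsto_eq_intros)
    show "AE z in N. norm (min (g n z) (gl z)) \<le> gl z" for n
      using gnn flgl by eventually_elim auto
  qed (use gi gli in auto)
  have ai: "integrable N (\<lambda>z. \<bar>g n z - gl z\<bar>)" for n
    using gi gli by auto
  have abs_eq: "integral\<^sup>L N (\<lambda>z. \<bar>g n z - gl z\<bar>) =
      integral\<^sup>L N (g n) + integral\<^sup>L N gl - 2 * integral\<^sup>L N (\<lambda>z. min (g n z) (gl z))" for n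
  proof -
    have "integral\<^sup>L N (\<lambda>z. \<bar>g n z - gl z\<bar>) = integral\<^sup>L N (\<lambda>z. g n z + gl z - 2 * min (g n z) (gl z))"
      by (intro Bochner_Integration.integral_cong refl) (auto simp: min_def)
    also have "\<dots> = integral\<^sup>L N (g n) + integral\<^sup>L N gl - 2 * integral\<^sup>L N (\<lambda>z. min (g n z) (gl z))"
      using gi gli mi by simp
    finally show ?thesis .
  qed
  have abs_lim: "(\<lambda>n. integral\<^sup>L N (\<lambda>z. \<bar>g n z - gl z\<bar>)) \<longlonglongrightarrow> 0"
    unfolding order_tendsto_iff
  proof (intro conjI allI impI)
    fix l :: real assume "l < 0"
    then show "eventually (\<lambda>n. l < integral\<^sup>L N (\<lambda>z. \<bar>g n z - gl z\<bar>)) sequentially"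
      by (intro always_eventually allI) (auto intro: less_le_trans[OF _ integral_nonneg_AE])
  next
    fix u :: real assume u: "u > 0"
    have e1: "eventually (\<lambda>n. integral\<^sup>L N (g n) \<le> integral\<^sup>L N gl + u / 3) sequentially"
      using u by (intro ls) auto
    have e2: "eventually (\<lambda>n. integral\<^sup>L N gl - u / 3 < integral\<^sup>L N (\<lambda>z. min (g n z) (gl z))) sequentially"
      using order_tendstoD(1)[OF min_lim, of "integral\<^sup>L N gl - u / 3"] u by simp
    show "eventually (\<lambda>n. integral\<^sup>L N (\<lambda>z. \<bar>g n z - gl z\<bar>) < u) sequentially"
      using e1 e2 by eventually_elim (use u in \<open>auto simp: abs_eq\<close>)
  qed
  have hi: "integrable N (\<lambda>z. min \<bar>f n z - fl z\<bar> (2 * gl z))" for n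
    using fi fli gli by (intro integrable_min) auto
  have h_lim: "(\<lambda>n. integral\<^sup>L N (\<lambda>z. min \<bar>f n z - fl z\<bar> (2 * gl z))) \<longlonglongrightarrow> integral\<^sup>L N (\<lambda>z. 0)"
  proof (rule integral_dominated_convergence[where w="\<lambda>z. 2 * gl z"])
    show "AE z in N. (\<lambda>n. min \<bar>f n z - fl z\<bar> (2 * gl z)) \<longlonglongrightarrow> 0"
      using cf flgl
    proof eventually_elim
      case (elim z)
      have "(\<lambda>n. \<bar>f n z - fl z\<bar>) \<longlonglongrightarrow> \<bar>fl z - fl z\<bar>"
        by (intro tendsto_intros elim(1))
      then have "(\<lambda>n. min \<bar>f n z - fl z\<bar> (2 * gl z)) \<longlonglongrightarrow> min \<bar>fl z - fl z\<bar> (2 * gl z)"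
        by (intro tendsto_min tendsto_const)
      then show ?case using elim(2) by simp
    qed
    show "AE z in N. norm (min \<bar>f n z - fl z\<bar> (2 * gl z)) \<le> 2 * gl z" for n
      using flgl by eventually_elim auto
  qed (use fi fli gli in auto)
  have bnd: "\<bar>integral\<^sup>L N (f n) - integral\<^sup>L N fl\<bar> \<le>
      integral\<^sup>L N (\<lambda>z. min \<bar>f n z - fl z\<bar> (2 * gl z)) + integral\<^sup>L N (\<lambda>z. \<bar>g n z - gl z\<bar>)" for n
  proof -
    have "\<bar>integral\<^sup>L N (f n) - integral\<^sup>L N fl\<bar> = \<bar>integral\<^sup>L N (\<lambda>z. f n z - fl z)\<bar>"
      using fi fli by simp
    also have "\<dots> \<le> integral\<^sup>L N (\<lambda>z. \<bar>f n z - fl z\<bar>)"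
      using integral_norm_bound[of N "\<lambda>z. f n z - fl z"] by simp
    also have "\<dots> \<le> integral\<^sup>L N (\<lambda>z. min \<bar>f n z - fl z\<bar> (2 * gl z) + \<bar>g n z - gl z\<bar>)"
    proof (rule integral_mono_AE)
      show "integrable N (\<lambda>z. \<bar>f n z - fl z\<bar>)" using fi fli by auto
      show "integrable N (\<lambda>z. min \<bar>f n z - fl z\<bar> (2 * gl z) + \<bar>g n z - gl z\<bar>)" using hi ai by auto
      show "AE z in N. \<bar>f n z - fl z\<bar> \<le> min \<bar>f n z - fl z\<bar> (2 * gl z) + \<bar>g n z - gl z\<bar>"
        using flgl domall
      proof eventually_elim
        case (elim z)
        have "\<bar>f n z\<bar> \<le> g n z" using elim(2) by auto
        then show ?case using elim(1) by (auto simp: min_def abs_if split: if_splits)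
      qed
    qed
    also have "\<dots> = integral\<^sup>L N (\<lambda>z. min \<bar>f n z - fl z\<bar> (2 * gl z)) + integral\<^sup>L N (\<lambda>z. \<bar>g n z - gl z\<bar>)"
      using hi ai by simp
    finally show ?thesis .
  qed
  have "(\<lambda>n. integral\<^sup>L N (f n) - integral\<^sup>L N fl) \<longlonglongrightarrow> 0"
  proof (rule Lim_null_comparison)
    show "eventually (\<lambda>n. norm (integral\<^sup>L N (f n) - integral\<^sup>L N fl) \<le>
      integral\<^sup>L N (\<lambda>z. min \<bar>f n z - fl z\<bar> (2 * gl z)) + integral\<^sup>L N (\<lambda>z. \<bar>g n z - gl z\<bar>)) sequentially"
      using bnd by (intro always_eventually allI) simp
    show "(\<lambda>n. integral\<^sup>L N (\<lambda>z. min \<bar>f n z - fl z\<bar> (2 * gl z)) + integral\<^sup>L N (\<lambda>z. \<bar>g n z - gl z\<bar>)) \<longlonglongrightarrow> 0"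
      using tendsto_add[OF h_lim abs_lim] by simp
  qed
  then show ?thesis by (simp add: LIM_zero_iff)
qed

lemma cnt_map_upt: "real (cnt (map f [0..<n]) z) = (\<Sum>i<n. if z < f i then 1 else 0)"
  by (induction n) (auto simp: cnt_def)

lemma cnt_mono: "z \<le> r \<Longrightarrow> cnt ys r \<le> cnt ys z"
  unfolding cnt_def by (induction ys) auto

lemma (in prob_space) emp_surv_conv:
  fixes Ys :: "nat \<Rightarrow> 'a \<Rightarrow> real" and Y :: "'a \<Rightarrow> real"
  assumes indep: "indep_vars (\<lambda>_. borel) Ys UNIV"
    and distr: "\<And>i. distr M borel (Ys i) = distr M borel Y"
    and rvY[measurable]: "random_variable borel Y"
    and Lip: "\<And>x y. x > 0 \<Longrightarrow> y > 0 \<Longrightarrow>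
        \<bar>prob {\<omega>\<in>space M. Y \<omega> \<le> x} - prob {\<omega>\<in>space M. Y \<omega> \<le> y}\<bar> \<le> L * \<bar>x - y\<bar>"
  shows "AE x in M. \<forall>z>0. (\<lambda>n. real (cnt (map (\<lambda>i. Ys i x) [0..<n]) z) / real n)
            \<longlonglongrightarrow> prob {\<omega>\<in>space M. z < Y \<omega>}"
proof -
  have rvYs[measurable]: "\<And>i. random_variable borel (Ys i)"
    using indep unfolding indep_vars_def by auto
  define G where "G z = prob {\<omega>\<in>space M. z < Y \<omega>}" for z
  have GF: "G z = 1 - prob {\<omega>\<in>space M. Y \<omega> \<le> z}" for z
  proof -
    have "{\<omega>\<in>space M. z < Y \<omega>} = space M - {\<omega>\<in>space M. Y \<omega> \<le> z}" by auto
    then show ?thesis unfolding G_def by (simp add: prob_compl)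
  qed
  have GLip: "\<bar>G x - G y\<bar> \<le> L * \<bar>x - y\<bar>" if "x > 0" "y > 0" for x y
    using Lip[OF that] unfolding GF by (simp add: abs_minus_commute)
  have Lnn: "L \<ge> 0"
  proof -
    have "0 \<le> \<bar>G 1 - G 2\<bar>" by simp
    also have "\<dots> \<le> L * \<bar>1 - 2\<bar>" by (rule GLip) auto
    finally show ?thesis by simp
  qed
  have conv_q: "AE x in M. (\<lambda>n. (\<Sum>i<n. if q < Ys i x then 1 else 0) / real n) \<longlonglongrightarrow> G q" for q
  proof -
    have "AE x in M. (\<lambda>n. (\<Sum>i<n. (\<lambda>v. if q < v then 1 else 0::real) (Ys i x)) / real n)
        \<longlonglongrightarrow> expectation (\<lambda>x. (\<lambda>v. if q < v then 1 else 0::real) (Y x))"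
    proof (rule slln_bounded[where a=0 and b=1])
      show "indep_vars (\<lambda>_. borel) (\<lambda>i x. (\<lambda>v. if q < v then 1 else 0::real) (Ys i x)) UNIV"
        by (rule indep_vars_compose2[OF indep]) auto
      show "distr M borel (\<lambda>x. (\<lambda>v. if q < v then 1 else 0::real) (Ys i x)) =
          distr M borel (\<lambda>x. (\<lambda>v. if q < v then 1 else 0::real) (Y x))" for i
      proof -
        have "distr M borel (\<lambda>x. (\<lambda>v. if q < v then 1 else 0::real) (Ys i x)) =
            distr (distr M borel (Ys i)) borel (\<lambda>v. if q < v then 1 else 0::real)"
          by (subst distr_distr) (auto simp: comp_def)
        also have "\<dots> = distr (distr M borel Y) borel (\<lambda>v. if q < v then 1 else 0::real)"
          by (simp add: distr)
        also have "\<dots> = distr M borel (\<lambda>x. (\<lambda>v. if q < v then 1 else 0::real) (Y x))"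
          by (subst distr_distr) (auto simp: comp_def)
        finally show ?thesis .
      qed
    qed auto
    moreover have "expectation (\<lambda>x. (\<lambda>v. if q < v then 1 else 0::real) (Y x)) = G q"
    proof -
      have "expectation (\<lambda>x. (\<lambda>v. if q < v then 1 else 0::real) (Y x)) =
          expectation (indicator {\<omega>\<in>space M. q < Y \<omega>})"
        by (intro Bochner_Integration.integral_cong) (auto simp: indicator_def)
      also have "\<dots> = G q" unfolding G_def by (simp add: integral_indicator Int_absorb2)
      finally show ?thesis .
    qed
    ultimately show ?thesis by simp
  qed
  have "AE x in M. \<forall>q\<in>\<rat>. (\<lambda>n. (\<Sum>i<n. if q < Ys i x then 1 else 0) / real n) \<longlonglongrightarrow> G q"
    by (rule AE_ball_countable') (auto intro: conv_q countable_rat)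
  then show ?thesis
  proof (rule AE_mp, intro AE_I2 impI)
    fix x assume x: "x \<in> space M"
      and H: "\<forall>q\<in>\<rat>. (\<lambda>n. (\<Sum>i<n. if q < Ys i x then 1 else 0) / real n) \<longlonglongrightarrow> G q"
    define Gh where "Gh n z = real (cnt (map (\<lambda>i. Ys i x) [0..<n]) z) / real n" for n z
    have H': "Gh n q = (\<Sum>i<n. if q < Ys i x then 1 else 0) / real n" for n q
      unfolding Gh_def cnt_map_upt ..
    have Ghmono: "Gh n r \<le> Gh n z" if "z \<le> r" for n z r
      unfolding Gh_def by (intro divide_right_mono) (auto intro: cnt_mono that)
    show "\<forall>z>0. (\<lambda>n. real (cnt (map (\<lambda>i. Ys i x) [0..<n]) z) / real n) \<longlonglongrightarrow> prob {\<omega>\<in>space M. z < Y \<omega>}"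
    proof (intro allI impI)
      fix z :: real assume z: "z > 0"
      show "(\<lambda>n. real (cnt (map (\<lambda>i. Ys i x) [0..<n]) z) / real n) \<longlonglongrightarrow> prob {\<omega>\<in>space M. z < Y \<omega>}"
        unfolding Gh_def[symmetric] G_def[symmetric]
      proof (rule tendstoI)
        fix e :: real assume e: "e > 0"
        define d where "d = min (z / 2) (e / (2 * (L + 1)))"
        have d: "d > 0" "d \<le> z / 2" "L * d < e / 2"
        proof -
          show "d > 0" using z e Lnn by (auto simp: d_def)
          show "d \<le> z / 2" unfolding d_def by (rule min.cobounded1)
          have "L * d \<le> L * (e / (2 * (L + 1)))" using Lnn by (intro mult_left_mono) (auto simp: d_def)
          also have "\<dots> < e / 2"
            using e Lnn by (simp add: field_simps)
          finally show "L * d < e / 2" .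
        qed
        obtain q where q: "q \<in> \<rat>" "z - d < q" "q < z" using Rats_dense_in_real[of "z - d" z] d by auto
        obtain r where r: "r \<in> \<rat>" "z < r" "r < z + d" using Rats_dense_in_real[of z "z + d"] d by auto
        have q0: "q > 0" using q d by linarith
        have Gq: "\<bar>G q - G z\<bar> < e / 2"
        proof -
          have "\<bar>G q - G z\<bar> \<le> L * \<bar>q - z\<bar>" by (rule GLip) (use q0 z in auto)
          also have "\<dots> \<le> L * d" using q Lnn by (intro mult_left_mono) auto
          finally show ?thesis using d by linarith
        qed
        have Gr: "\<bar>G r - G z\<bar> < e / 2"
        proof -
          have "\<bar>G r - G z\<bar> \<le> L * \<bar>r - z\<bar>" by (rule GLip) (use r z in auto)
          also have "\<dots> \<le> L * d" using r Lnn by (intro mult_left_mono) auto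
          finally show ?thesis using d by linarith
        qed
        have cq: "(\<lambda>n. Gh n q) \<longlonglongrightarrow> G q" using H q(1) unfolding H' by auto
        have cr: "(\<lambda>n. Gh n r) \<longlonglongrightarrow> G r" using H r(1) unfolding H' by auto
        have "eventually (\<lambda>n. dist (Gh n q) (G q) < e / 2) sequentially"
          using cq e by (intro tendstoD) auto
        moreover have "eventually (\<lambda>n. dist (Gh n r) (G r) < e / 2) sequentially"
          using cr e by (intro tendstoD) auto
        ultimately show "eventually (\<lambda>n. dist (Gh n z) (G z) < e) sequentially"
        proof eventually_elim
          case (elim n)
          have "Gh n r \<le> Gh n z" "Gh n z \<le> Gh n q" using q r by (auto intro: Ghmono)
          then show ?case using elim Gq Gr unfolding dist_real_def abs_less_iff by linarith
        qed
      qed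
    qed
  qed
qed

lemma (in prob_space) tonelli_phi:
  fixes Y :: "'a \<Rightarrow> real" and k :: "real \<Rightarrow> real"
  assumes rvY[measurable]: "random_variable borel Y"
    and k_meas[measurable]: "k \<in> borel_measurable borel"
    and k_nn: "\<And>z. k z \<ge> 0"
    and intB: "integrable lborel (\<lambda>z. indicator {0..} z * (prob {\<omega>\<in>space M. z < Y \<omega>} * k z))"
    and locint: "\<And>y. integrable lborel (\<lambda>z. indicator {0..} z * (if z < y then k z else 0))"
  defines "\<phi> \<equiv> (\<lambda>y. integral\<^sup>L lborel (\<lambda>z. indicator {0..} z * (if z < y then k z else 0)))"
  shows "\<phi> \<in> borel_measurable borel" "\<And>y. \<phi> y \<ge> 0"
    "integrable M (\<lambda>x. \<phi> (Y x))"
    "expectation (\<lambda>x. \<phi> (Y x)) = integral\<^sup>L lborel (\<lambda>z. indicator {0..} z * (prob {\<omega>\<in>space M. z < Y \<omega>} * k z))"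
proof -
  show phi_nn: "\<phi> y \<ge> 0" for y
    unfolding \<phi>_def by (intro integral_nonneg_AE AE_I2) (auto simp: indicator_def k_nn)
  have "mono \<phi>"
  proof (rule monoI)
    fix y1 y2 :: real assume "y1 \<le> y2"
    then show "\<phi> y1 \<le> \<phi> y2"
      unfolding \<phi>_def by (intro integral_mono locint) (auto simp: indicator_def k_nn)
  qed
  then show phi_meas[measurable]: "\<phi> \<in> borel_measurable borel" by (rule borel_measurable_mono)
  interpret P: pair_sigma_finite M lborel
    by (intro pair_sigma_finite.intro sigma_finite_measure_axioms sigma_finite_lborel)
  define B where "B = integral\<^sup>L lborel (\<lambda>z. indicator {0..} z * (prob {\<omega>\<in>space M. z < Y \<omega>} * k z))"
  have B_nn: "B \<ge> 0" unfolding B_def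
    by (intro integral_nonneg_AE AE_I2) (auto simp: indicator_def k_nn)
  have inner: "(\<integral>\<^sup>+ x. ennreal (indicator {0..} z * (if z < Y x then k z else 0)) \<partial>M)
      = ennreal (indicator {0..} z * (prob {\<omega>\<in>space M. z < Y \<omega>} * k z))" for z
  proof -
    have "(\<integral>\<^sup>+ x. ennreal (indicator {0..} z * (if z < Y x then k z else 0)) \<partial>M)
        = (\<integral>\<^sup>+ x. ennreal (indicator {0..} z * k z) * indicator {\<omega>\<in>space M. z < Y \<omega>} x \<partial>M)"
      by (intro nn_integral_cong) (auto simp: indicator_def)
    also have "\<dots> = ennreal (indicator {0..} z * k z) * emeasure M {\<omega>\<in>space M. z < Y \<omega>}"
      by (intro nn_integral_cmult_indicator) measurable
    also have "\<dots> = ennreal (indicator {0..} z * (prob {\<omega>\<in>space M. z < Y \<omega>} * k z))"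
      by (simp add: emeasure_eq_measure ennreal_mult'[symmetric] mult_ac indicator_def k_nn)
    finally show ?thesis .
  qed
  have "(\<integral>\<^sup>+ x. ennreal (\<phi> (Y x)) \<partial>M)
      = (\<integral>\<^sup>+ x. (\<integral>\<^sup>+ z. ennreal (indicator {0..} z * (if z < Y x then k z else 0)) \<partial>lborel) \<partial>M)"
    unfolding \<phi>_def
    by (intro nn_integral_cong nn_integral_eq_integral[symmetric] locint AE_I2)
       (auto simp: indicator_def k_nn)
  also have "\<dots> = (\<integral>\<^sup>+ z. (\<integral>\<^sup>+ x. ennreal (indicator {0..} z * (if z < Y x then k z else 0)) \<partial>M) \<partial>lborel)"
    by (rule P.Fubini'[symmetric]) measurable
  also have "\<dots> = (\<integral>\<^sup>+ z. ennreal (indicator {0..} z * (prob {\<omega>\<in>space M. z < Y \<omega>} * k z)) \<partial>lborel)"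
    by (simp only: inner)
  also have "\<dots> = ennreal B"
    unfolding B_def by (intro nn_integral_eq_integral intB AE_I2) (auto simp: indicator_def k_nn)
  finally have nn: "(\<integral>\<^sup>+ x. ennreal (\<phi> (Y x)) \<partial>M) = ennreal B" .
  show "integrable M (\<lambda>x. \<phi> (Y x))"
    by (rule integrableI_nonneg) (use nn phi_nn in auto)
  have "expectation (\<lambda>x. \<phi> (Y x)) = enn2real (\<integral>\<^sup>+ x. ennreal (\<phi> (Y x)) \<partial>M)"
    by (rule integral_eq_nn_integral) (use phi_nn in auto)
  also have "\<dots> = B" using nn B_nn by simp
  finally show "expectation (\<lambda>x. \<phi> (Y x)) = integral\<^sup>L lborel (\<lambda>z. indicator {0..} z * (prob {\<omega>\<in>space M. z < Y \<omega>} * k z))"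
    unfolding B_def .
qed

lemma cnt_sort: "cnt (sort ys) z = cnt ys z"
  unfolding cnt_def by (simp add: filter_sort)

lemma (in prob_space) one_side:
  fixes Ys :: "nat \<Rightarrow> 'a \<Rightarrow> real" and Y :: "'a \<Rightarrow> real" and w :: "real \<Rightarrow> real"
    and \<alpha> H \<gamma> L :: real
  assumes indep: "indep_vars (\<lambda>_. borel) Ys UNIV"
    and distr: "\<And>i. distr M borel (Ys i) = distr M borel Y"
    and rvY[measurable]: "random_variable borel Y"
    and Ynn: "\<And>x. x \<in> space M \<Longrightarrow> Y x \<ge> 0"
    and Ysnn: "\<And>i x. x \<in> space M \<Longrightarrow> Ys i x \<ge> 0"
    and wf: "weight_fn w" and hw: "holder_on01 \<alpha> H w"
    and \<alpha>: "0 < \<alpha>" "\<alpha> \<le> 1" and H: "H > 0" and \<gamma>: "0 < \<gamma>" "\<gamma> \<le> \<alpha>"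
    and intG: "(\<integral>\<^sup>+ z. indicator {0..} z * ennreal (prob {\<omega>\<in>space M. z < Y \<omega>} powr \<gamma>) \<partial>lborel) < \<infinity>"
    and Lip: "\<And>x y. x > 0 \<Longrightarrow> y > 0 \<Longrightarrow>
        \<bar>prob {\<omega>\<in>space M. Y \<omega> \<le> x} - prob {\<omega>\<in>space M. Y \<omega> \<le> y}\<bar> \<le> L * \<bar>x - y\<bar>"
  shows "AE x in M. (\<lambda>n. est_sum w n (sort (map (\<lambda>i. Ys i x) [0..<n])))
           \<longlonglongrightarrow> integral\<^sup>L lborel (\<lambda>z. indicator {0..} z * w (prob {\<omega>\<in>space M. z < Y \<omega>}))"
proof -
  have rvYs[measurable]: "\<And>i. random_variable borel (Ys i)"
    using indep unfolding indep_vars_def by auto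
  define G where "G z = prob {\<omega>\<in>space M. z < Y \<omega>}" for z
  have G01: "0 \<le> G z" "G z \<le> 1" for z unfolding G_def by auto
  have GF: "G z = 1 - prob {\<omega>\<in>space M. Y \<omega> \<le> z}" for z
  proof -
    have "{\<omega>\<in>space M. z < Y \<omega>} = space M - {\<omega>\<in>space M. Y \<omega> \<le> z}" by auto
    then show ?thesis unfolding G_def by (simp add: prob_compl)
  qed
  have "mono (\<lambda>z. prob {\<omega>\<in>space M. Y \<omega> \<le> z})"
    by (rule monoI) (auto intro!: finite_measure_mono)
  then have F_meas[measurable]: "(\<lambda>z. prob {\<omega>\<in>space M. Y \<omega> \<le> z}) \<in> borel_measurable borel"
    by (rule borel_measurable_mono)
  have G_meas[measurable]: "G \<in> borel_measurable borel"
    unfolding GF[abs_def] by measurable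
  define c where "c z = max (G z) (exp (-z / \<alpha>))" for z
  have c_meas[measurable]: "c \<in> borel_measurable borel" unfolding c_def by measurable
  have c_pos: "c z > 0" for z unfolding c_def by (simp add: max.strict_coboundedI2)
  have G_le_c: "G z \<le> c z" for z unfolding c_def by simp
  have exp_le_c: "exp (-z / \<alpha>) \<le> c z" for z unfolding c_def by simp
  define k where "k z = c z powr (\<alpha> - 1)" for z
  have k_meas[measurable]: "k \<in> borel_measurable borel" unfolding k_def by measurable
  have k_nn: "k z \<ge> 0" for z unfolding k_def by simp
  have w0: "w 0 = 0" and wcont: "continuous_on {0..1} w" using wf unfolding weight_fn_def by auto
  have wbound: "\<bar>w p\<bar> \<le> H * p powr \<alpha>" if "0 \<le> p" "p \<le> 1" for p
    using hw that unfolding holder_on01_def by (auto simp: w0 dest: bspec[of _ _ p] bspec[of _ _ 0])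
  have dombound: "\<bar>w p\<bar> \<le> H * (c z powr \<alpha> + p * k z)" if "0 \<le> p" "p \<le> 1" for p z
  proof -
    have "\<bar>w p\<bar> \<le> H * p powr \<alpha>" by (rule wbound[OF that])
    also have "\<dots> \<le> H * (c z powr \<alpha> + p * k z)"
      unfolding k_def using H \<alpha> that c_pos[of z] by (intro mult_left_mono powr_split_bound) auto
    finally show ?thesis .
  qed
  have intGg: "integrable lborel (\<lambda>z. indicator {0..} z * G z powr \<gamma>)"
  proof (rule integrableI_nonneg)
    show "(\<lambda>z. indicator {0..} z * G z powr \<gamma>) \<in> borel_measurable lborel" by measurable
    show "AE z in lborel. 0 \<le> indicator {0..} z * G z powr \<gamma>" by (intro AE_I2) auto
    have "(\<integral>\<^sup>+ z. ennreal (indicator {0..} z * G z powr \<gamma>) \<partial>lborel) =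
        (\<integral>\<^sup>+ z. indicator {0..} z * ennreal (prob {\<omega>\<in>space M. z < Y \<omega>} powr \<gamma>) \<partial>lborel)"
      by (intro nn_integral_cong) (auto simp: G_def indicator_def)
    then show "(\<integral>\<^sup>+ z. ennreal (indicator {0..} z * G z powr \<gamma>) \<partial>lborel) < \<infinity>" using intG by simp
  qed
  have intE: "integrable lborel (\<lambda>z::real. indicator {0..} z * exp (- z))"
  proof -
    have "(\<lambda>x. exp (-1*x) :: real) integrable_on {0..}"
      by (rule integrable_on_exp_minus_to_infinity) simp
    then have "(\<lambda>x. exp (-1*x) :: real) absolutely_integrable_on {0..}"
      by (rule nonnegative_absolutely_integrable_1) simp
    then have "integrable lebesgue (\<lambda>z. indicator {0..} z * exp (- z::real))"
      by (simp add: set_integrable_def)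
    then show ?thesis by (subst (asm) integrable_completion) auto
  qed
  have intA: "integrable lborel (\<lambda>z. indicator {0..} z * c z powr \<alpha>)"
  proof (rule Bochner_Integration.integrable_bound[OF Bochner_Integration.integrable_add[OF intGg intE]])
    show "(\<lambda>z. indicator {0..} z * c z powr \<alpha>) \<in> borel_measurable lborel" by measurable
    show "AE z in lborel. norm (indicator {0..} z * c z powr \<alpha>) \<le> norm (indicator {0..} z * G z powr \<gamma> + indicator {0..} z * exp (- z))"
    proof (intro AE_I2)
      fix z :: real
      have "c z powr \<alpha> \<le> G z powr \<alpha> + exp (-z / \<alpha>) powr \<alpha>"
        unfolding c_def using G01 \<alpha> by (intro max_powr_le) auto
      also have "\<dots> \<le> G z powr \<gamma> + exp (- z)"
        using exp_powr_div[OF \<alpha>(1)] powr_le_exp_small[OF G01 \<gamma>] by simp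
      finally have "c z powr \<alpha> \<le> G z powr \<gamma> + exp (- z)" .
      then show "norm (indicator {0..} z * c z powr \<alpha>) \<le> norm (indicator {0..} z * G z powr \<gamma> + indicator {0..} z * exp (- z))"
        by (auto simp: indicator_def)
    qed
  qed
  have intB: "integrable lborel (\<lambda>z. indicator {0..} z * (G z * k z))"
  proof (rule Bochner_Integration.integrable_bound[OF intA])
    show "(\<lambda>z. indicator {0..} z * (G z * k z)) \<in> borel_measurable lborel" by measurable
    show "AE z in lborel. norm (indicator {0..} z * (G z * k z)) \<le> norm (indicator {0..} z * c z powr \<alpha>)"
    proof (intro AE_I2)
      fix z :: real
      have "G z * k z \<le> c z powr \<alpha>" unfolding k_def using G01 G_le_c c_pos by (intro mult_powr_le) auto
      then show "norm (indicator {0..} z * (G z * k z)) \<le> norm (indicator {0..} z * c z powr \<alpha>)"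
        using G01 k_nn[of z] by (auto simp: indicator_def)
    qed
  qed
  have locint: "integrable lborel (\<lambda>z. indicator {0..} z * (if z < y then k z else 0))" for y
  proof (rule Bochner_Integration.integrable_bound[OF integral_indicator_Ico(1)[of "max y 0" "exp (max y 0 / \<alpha>)"]])
    show "(\<lambda>z. indicator {0..} z * (if z < y then k z else 0)) \<in> borel_measurable lborel" by measurable
    show "AE z in lborel. norm (indicator {0..} z * (if z < y then k z else 0)) \<le> norm (indicator {0..<max y 0} z * exp (max y 0 / \<alpha>))"
    proof (intro AE_I2)
      fix z :: real
      show "norm (indicator {0..} z * (if z < y then k z else 0)) \<le> norm (indicator {0..<max y 0} z * exp (max y 0 / \<alpha>))"
      proof (cases "0 \<le> z \<and> z < y")
        case True
        have "k z \<le> exp (z / \<alpha>)" unfolding k_def using True \<alpha> exp_le_c[of z] by (intro powr_neg_exp_bound) auto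
        also have "\<dots> \<le> exp (max y 0 / \<alpha>)" using True \<alpha> by (auto simp: divide_right_mono)
        finally show ?thesis using True k_nn[of z] by (auto simp: indicator_def)
      next
        case False
        then show ?thesis by (auto simp: indicator_def)
      qed
    qed
  qed simp
  define \<phi> where "\<phi> = (\<lambda>y. integral\<^sup>L lborel (\<lambda>z. indicator {0..} z * (if z < y then k z else 0)))"
  have intB': "integrable lborel (\<lambda>z. indicator {0..} z * (prob {\<omega>\<in>space M. z < Y \<omega>} * k z))"
    using intB unfolding G_def .
  note T = tonelli_phi[OF rvY k_meas k_nn intB' locint]
  have phi_meas[measurable]: "\<phi> \<in> borel_measurable borel" using T(1) unfolding \<phi>_def .
  have phi_nn: "\<phi> y \<ge> 0" for y using T(2) unfolding \<phi>_def by simp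
  have phi_int: "integrable M (\<lambda>x. \<phi> (Y x))" using T(3) unfolding \<phi>_def by simp
  define B where "B = integral\<^sup>L lborel (\<lambda>z. indicator {0..} z * (G z * k z))"
  have EphiB: "expectation (\<lambda>x. \<phi> (Y x)) = B" using T(4) unfolding B_def G_def \<phi>_def by simp
  have AEphi: "AE x in M. \<forall>e>0. eventually (\<lambda>n. (\<Sum>i<n. \<phi> (Ys i x)) / real n \<le> expectation (\<lambda>x. \<phi> (Y x)) + e) sequentially"
  proof (rule slln_upper)
    show "indep_vars (\<lambda>_. borel) (\<lambda>i x. \<phi> (Ys i x)) UNIV"
      by (rule indep_vars_compose2[OF indep]) auto
    show "distr M borel (\<lambda>x. \<phi> (Ys i x)) = distr M borel (\<lambda>x. \<phi> (Y x))" for i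
      by (rule distr_compose_eq[OF distr]) auto
  qed (use phi_nn phi_int in auto)
  have AEconv: "AE x in M. \<forall>z>0. (\<lambda>n. real (cnt (map (\<lambda>i. Ys i x) [0..<n]) z) / real n) \<longlonglongrightarrow> G z"
    unfolding G_def by (rule emp_surv_conv[OF indep distr rvY Lip])
  define wc where "wc v = w (max 0 (min 1 v))" for v
  have "continuous_on UNIV wc"
    unfolding wc_def
    by (rule continuous_on_compose2[OF wcont]) (auto intro!: continuous_intros)
  then have wc_meas[measurable]: "wc \<in> borel_measurable borel" by (rule borel_measurable_continuous_onI)
  have wcG: "w (G z) = wc (G z)" for z using G01[of z] unfolding wc_def by simp
  have fl_meas: "(\<lambda>z. indicator {0..} z * w (G z)) \<in> borel_measurable lborel"
    unfolding wcG by measurable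
  define A where "A = integral\<^sup>L lborel (\<lambda>z. indicator {0..} z * c z powr \<alpha>)"
  have "AE x in M. (\<forall>e>0. eventually (\<lambda>n. (\<Sum>i<n. \<phi> (Ys i x)) / real n \<le> expectation (\<lambda>x. \<phi> (Y x)) + e) sequentially)
     \<and> (\<forall>z>0. (\<lambda>n. real (cnt (map (\<lambda>i. Ys i x) [0..<n]) z) / real n) \<longlonglongrightarrow> G z)"
    using AEphi AEconv by (rule AE_conjI)
  then show ?thesis
  proof (rule AE_mp, intro AE_I2 impI)
    fix x assume x: "x \<in> space M"
    assume "(\<forall>e>0. eventually (\<lambda>n. (\<Sum>i<n. \<phi> (Ys i x)) / real n \<le> expectation (\<lambda>x. \<phi> (Y x)) + e) sequentially)
     \<and> (\<forall>z>0. (\<lambda>n. real (cnt (map (\<lambda>i. Ys i x) [0..<n]) z) / real n) \<longlonglongrightarrow> G z)"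
    then have Hphi: "\<And>e. e > 0 \<Longrightarrow> eventually (\<lambda>n. (\<Sum>i<n. \<phi> (Ys i x)) / real n \<le> B + e) sequentially"
      and Hconv: "\<And>z. z > 0 \<Longrightarrow> (\<lambda>n. real (cnt (map (\<lambda>i. Ys i x) [0..<n]) z) / real n) \<longlonglongrightarrow> G z"
      unfolding EphiB by auto
    define ys where "ys n = map (\<lambda>i. Ys i x) [0..<n]" for n
    define Gh where "Gh n z = real (cnt (ys n) z) / real n" for n z
    have Gh01: "0 \<le> Gh n z" "Gh n z \<le> 1" for n z
    proof -
      show "0 \<le> Gh n z" unfolding Gh_def by simp
      have "cnt (ys n) z \<le> n" unfolding cnt_def ys_def
        using length_filter_le[of "\<lambda>v. z < v" "map (\<lambda>i. Ys i x) [0..<n]"] by simp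
      then show "Gh n z \<le> 1" unfolding Gh_def by (cases "n = 0") (auto simp: divide_le_eq_1)
    qed
    have Gh_sum: "Gh n z = (\<Sum>i<n. if z < Ys i x then 1 else 0) / real n" for n z
      unfolding Gh_def ys_def cnt_map_upt ..
    define f where "f n z = indicator {0..} z * w (Gh n z)" for n z
    define fl where "fl z = indicator {0..} z * w (G z)" for z
    define g where "g n z = H * (indicator {0..} z * c z powr \<alpha>) + H * (indicator {0..} z * (Gh n z * k z))" for n z
    define gl where "gl z = H * (indicator {0..} z * c z powr \<alpha>) + H * (indicator {0..} z * (G z * k z))" for z
    have est: "est_sum w n (sort (ys n)) = integral\<^sup>L lborel (f n)" and fi: "integrable lborel (f n)" for n
    proof -
      have "sorted (sort (ys n))" by simp
      moreover have "\<forall>v\<in>set (sort (ys n)). v \<ge> 0" using Ysnn x by (auto simp: ys_def)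
      ultimately have "integrable lborel (\<lambda>z. indicator {0..} z * w (real (cnt (sort (ys n)) z) / real n)) \<and>
          est_sum w n (sort (ys n)) = integral\<^sup>L lborel (\<lambda>z. indicator {0..} z * w (real (cnt (sort (ys n)) z) / real n))"
        by (rule est_sum_integral[where w=w and n=n, OF _ _ w0])
      then show "est_sum w n (sort (ys n)) = integral\<^sup>L lborel (f n)" "integrable lborel (f n)"
        unfolding cnt_sort f_def[abs_def] Gh_def by auto
    qed
    have gli: "integrable lborel gl" unfolding gl_def using intA intB by auto
    have fli: "integrable lborel fl"
    proof (rule Bochner_Integration.integrable_bound[OF gli])
      show "fl \<in> borel_measurable lborel" unfolding fl_def using fl_meas .
      show "AE z in lborel. norm (fl z) \<le> norm (gl z)"
      proof (intro AE_I2)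
        fix z :: real
        have "\<bar>w (G z)\<bar> \<le> H * (c z powr \<alpha> + G z * k z)" by (rule dombound[OF G01])
        then show "norm (fl z) \<le> norm (gl z)"
          unfolding fl_def gl_def by (auto simp: indicator_def algebra_simps)
      qed
    qed
    have intGhk: "integrable lborel (\<lambda>z. indicator {0..} z * (Gh n z * k z))"
      and intGhk_eq: "integral\<^sup>L lborel (\<lambda>z. indicator {0..} z * (Gh n z * k z)) = (\<Sum>i<n. \<phi> (Ys i x)) / real n" for n
    proof -
      have eq: "indicator {0..} z * (Gh n z * k z) = (\<Sum>i<n. indicator {0..} z * (if z < Ys i x then k z else 0)) / real n" for z
        unfolding Gh_sum by (simp add: sum_distrib_left sum_divide_distrib[symmetric] if_distrib mult_ac cong: if_cong)
      show "integrable lborel (\<lambda>z. indicator {0..} z * (Gh n z * k z))"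
        unfolding eq by (intro integrable_divide Bochner_Integration.integrable_sum locint)
      show "integral\<^sup>L lborel (\<lambda>z. indicator {0..} z * (Gh n z * k z)) = (\<Sum>i<n. \<phi> (Ys i x)) / real n"
        unfolding eq \<phi>_def by (subst integral_divide_zero, subst Bochner_Integration.integral_sum) (auto intro: locint)
    qed
    have gi: "integrable lborel (g n)" for n unfolding g_def using intA intGhk by auto
    have intg: "integral\<^sup>L lborel (g n) = H * A + H * ((\<Sum>i<n. \<phi> (Ys i x)) / real n)" for n
      unfolding g_def A_def using intA intGhk[of n] intGhk_eq[of n] by simp
    have intgl: "integral\<^sup>L lborel gl = H * A + H * B"
      unfolding gl_def A_def B_def using intA intB by simp
    have conv_all: "AE z in lborel. (\<lambda>n. f n z) \<longlonglongrightarrow> fl z \<and> (\<lambda>n. g n z) \<longlonglongrightarrow> gl z"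
      using AE_lborel_singleton[of 0]
    proof eventually_elim
      case (elim z)
      show ?case
      proof (cases "z > 0")
        case True
        have cz: "(\<lambda>n. Gh n z) \<longlonglongrightarrow> G z" using Hconv[OF True] unfolding Gh_def ys_def .
        have "(\<lambda>n. w (Gh n z)) \<longlonglongrightarrow> w (G z)"
          by (rule continuous_on_tendsto_compose[OF wcont cz]) (auto simp: G01 Gh01)
        then have "(\<lambda>n. f n z) \<longlonglongrightarrow> fl z" unfolding f_def fl_def by (intro tendsto_intros)
        moreover have "(\<lambda>n. g n z) \<longlonglongrightarrow> gl z" unfolding g_def gl_def by (intro tendsto_intros cz)
        ultimately show ?thesis ..
      next
        case False
        then have "z < 0" using elim by auto
        then show ?thesis by (simp add: f_def fl_def g_def gl_def)
      qed
    qed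
    have "(\<lambda>n. integral\<^sup>L lborel (f n)) \<longlonglongrightarrow> integral\<^sup>L lborel fl"
    proof (rule gen_dct[OF fi fli gi gli])
      show "AE z in lborel. (\<lambda>n. f n z) \<longlonglongrightarrow> fl z" using conv_all by eventually_elim auto
      show "AE z in lborel. (\<lambda>n. g n z) \<longlonglongrightarrow> gl z" using conv_all by eventually_elim auto
      show "AE z in lborel. \<bar>f n z\<bar> \<le> g n z" for n
      proof (intro AE_I2)
        fix z :: real
        have "\<bar>w (Gh n z)\<bar> \<le> H * (c z powr \<alpha> + Gh n z * k z)" by (rule dombound[OF Gh01])
        then show "\<bar>f n z\<bar> \<le> g n z" unfolding f_def g_def by (auto simp: indicator_def algebra_simps)
      qed
      fix e :: real assume e: "e > 0"
      have "eventually (\<lambda>n. (\<Sum>i<n. \<phi> (Ys i x)) / real n \<le> B + e / H) sequentially"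
        using e H by (intro Hphi) auto
      then show "eventually (\<lambda>n. integral\<^sup>L lborel (g n) \<le> integral\<^sup>L lborel gl + e) sequentially"
      proof eventually_elim
        case (elim n)
        have "H * ((\<Sum>i<n. \<phi> (Ys i x)) / real n) \<le> H * (B + e / H)"
          using elim H by (intro mult_left_mono) auto
        also have "\<dots> = H * B + e" using H by (simp add: algebra_simps)
        finally show ?case unfolding intg intgl by linarith
      qed
    qed
    then show "(\<lambda>n. est_sum w n (sort (map (\<lambda>i. Ys i x) [0..<n])))
           \<longlonglongrightarrow> integral\<^sup>L lborel (\<lambda>z. indicator {0..} z * w (prob {\<omega>\<in>space M. z < Y \<omega>}))"
      unfolding est[unfolded ys_def] fl_def G_def .
  qed
qed

theorem proposition1:
  fixes M :: "'a measure"
    and X :: "'a \<Rightarrow> real" and Xs :: "nat \<Rightarrow> 'a \<Rightarrow> real"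
    and wp wm up um :: "real \<Rightarrow> real"
    and \<alpha> H \<gamma> Lp Lm :: real
  assumes "prob_space M"
    and X_rv: "X \<in> borel_measurable M"
    and Xs_rv: "\<And>i. Xs i \<in> borel_measurable M"
    and Xs_indep: "prob_space.indep_vars M (\<lambda>_. borel) Xs UNIV"
    and Xs_distr: "\<And>i. distr M borel (Xs i) = distr M borel X"
    and wp: "weight_fn wp" and wm: "weight_fn wm"
    and up_cont: "continuous_on UNIV up" and um_cont: "continuous_on UNIV um"
    and up_nonneg: "\<And>x. up x \<ge> 0" and um_nonneg: "\<And>x. um x \<ge> 0"
    and up_strict: "strict_mono_on {0..} up"
    and um_strict: "\<And>x y. x < y \<Longrightarrow> y \<le> 0 \<Longrightarrow> um y < um x"
    and \<alpha>: "0 < \<alpha>" "\<alpha> \<le> 1" and H: "H > 0"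
    and hp: "holder_on01 \<alpha> H wp" and hm: "holder_on01 \<alpha> H wm"
    and \<gamma>: "0 < \<gamma>" "\<gamma> \<le> \<alpha>"
    and intp: "(\<integral>\<^sup>+ z. indicator {0..} z *
                 ennreal (measure M {\<omega> \<in> space M. up (X \<omega>) > z} powr \<gamma>) \<partial>lborel) < \<infinity>"
    and intm: "(\<integral>\<^sup>+ z. indicator {0..} z *
                 ennreal (measure M {\<omega> \<in> space M. um (X \<omega>) > z} powr \<gamma>) \<partial>lborel) < \<infinity>"
    and Lip_p: "\<And>x y. x > 0 \<Longrightarrow> y > 0 \<Longrightarrow>
        \<bar>measure M {\<omega> \<in> space M. up (X \<omega>) \<le> x} - measure M {\<omega> \<in> space M. up (X \<omega>) \<le> y}\<bar>
          \<le> Lp * \<bar>x - y\<bar>"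
    and Lip_m: "\<And>x y. x > 0 \<Longrightarrow> y > 0 \<Longrightarrow>
        \<bar>measure M {\<omega> \<in> space M. um (X \<omega>) \<le> x} - measure M {\<omega> \<in> space M. um (X \<omega>) \<le> y}\<bar>
          \<le> Lm * \<bar>x - y\<bar>"
  shows "AE \<omega> in M. (\<lambda>n. cpt_est wp wm up um (map (\<lambda>i. Xs i \<omega>) [0..<n]))
                        \<longlonglongrightarrow> cpt_value M wp wm up um X"
proof -
  interpret prob_space M by fact
  have up_meas[measurable]: "up \<in> borel_measurable borel" by (rule borel_measurable_continuous_onI[OF up_cont])
  have um_meas[measurable]: "um \<in> borel_measurable borel" by (rule borel_measurable_continuous_onI[OF um_cont])
  note [measurable] = X_rv Xs_rv
  have Pp: "AE x in M. (\<lambda>n. est_sum wp n (sort (map (\<lambda>i. up (Xs i x)) [0..<n])))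
           \<longlonglongrightarrow> integral\<^sup>L lborel (\<lambda>z. indicator {0..} z * wp (prob {\<omega>\<in>space M. z < up (X \<omega>)}))"
  proof (rule one_side[where \<alpha>=\<alpha> and H=H and \<gamma>=\<gamma> and L=Lp])
    show "indep_vars (\<lambda>_. borel) (\<lambda>i x. up (Xs i x)) UNIV"
      by (rule indep_vars_compose2[OF Xs_indep]) auto
    show "distr M borel (\<lambda>x. up (Xs i x)) = distr M borel (\<lambda>x. up (X x))" for i
      by (rule distr_compose_eq[OF Xs_distr]) auto
  qed (use up_nonneg wp hp \<alpha> H \<gamma> intp Lip_p in auto)
  have Pm: "AE x in M. (\<lambda>n. est_sum wm n (sort (map (\<lambda>i. um (Xs i x)) [0..<n])))
           \<longlonglongrightarrow> integral\<^sup>L lborel (\<lambda>z. indicator {0..} z * wm (prob {\<omega>\<in>space M. z < um (X \<omega>)}))"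
  proof (rule one_side[where \<alpha>=\<alpha> and H=H and \<gamma>=\<gamma> and L=Lm])
    show "indep_vars (\<lambda>_. borel) (\<lambda>i x. um (Xs i x)) UNIV"
      by (rule indep_vars_compose2[OF Xs_indep]) auto
    show "distr M borel (\<lambda>x. um (Xs i x)) = distr M borel (\<lambda>x. um (X x))" for i
      by (rule distr_compose_eq[OF Xs_distr]) auto
  qed (use um_nonneg wm hm \<alpha> H \<gamma> intm Lip_m in auto)
  have est_eq: "cpt_est wp wm up um (map (\<lambda>i. Xs i \<omega>) [0..<n]) =
      est_sum wp n (sort (map (\<lambda>i. up (Xs i \<omega>)) [0..<n])) - est_sum wm n (sort (map (\<lambda>i. um (Xs i \<omega>)) [0..<n]))" for \<omega> n
    unfolding cpt_est_def est_sum_def Let_def by (simp add: comp_def)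
  have val_eq: "cpt_value M wp wm up um X =
      integral\<^sup>L lborel (\<lambda>z. indicator {0..} z * wp (prob {\<omega>\<in>space M. z < up (X \<omega>)})) -
      integral\<^sup>L lborel (\<lambda>z. indicator {0..} z * wm (prob {\<omega>\<in>space M. z < um (X \<omega>)}))"
    unfolding cpt_value_def set_lebesgue_integral_def by simp
  show ?thesis
    using Pp Pm by eventually_elim (unfold est_eq val_eq, rule tendsto_diff)
qed

end
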